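(* At the terminal level $\mathfrak{m}$, the unique closed communicating class $\mathscr{P}^{\star,\mathfrak{m}}_1$ of $\mathfrak{X}^{\star,\mathfrak{m}}$ consists exactly of the ground states: $$\bigcup_{\mathcal{P}\in\mathscr{P}^{\star,\mathfrak{m}}_1}\mathcal{P}=\mathcal{S}.$$
   Context: Setting. Let $\Omega$ be a finite set with a connected undirected graph structure; write $\eta\sim\xi$ if $\{\eta,\xi\}$ is an edge. Let $\mathbb{H}:\Omega\to\mathbb{R}$. Paths and heights. A path $\omega:\eta\to\xi$ is a sequence $(\omega_n)_{n=0}^N$ with $\omega_0=\eta$, $\omega_N=\xi$ and $\omega_n\sim\omega_{n+1}$ ($N=0$ allowed). Its height is $\Phi_\omega:=\max_n\mathbb{H}(\omega_n)$. Set $\Phi(\eta,\xi):=\min_{\omega:\eta\to\xi}\Phi_\omega$. For nonempty sets, $\Phi(\mathcal{A},\mathcal{B}):=\min_{\eta\in\mathcal{A},\xi\in\mathcal{B}}\Phi(\eta,\xi)$, and $\Phi(\mathcal{A},\eta):=\Phi(\mathcal{A},\{\eta\})$. Ground states. $\mathcal{S}:=\operatorname{argmin}_\Omega\mathbb{H}$, $\overline{\Phi}:=\max_{s,s'\in\mathcal{S}}\Phi(s,s')$, and $\overline{\Omega}:=\{\eta:\Phi(\mathcal{S},\eta)\le\overline{\Phi}\}$. Sets. For $\mathcal{A}\subseteq\Omega$: $\mathcal{F}(\mathcal{A}):=\operatorname{argmin}_{\mathcal{A}}\mathbb{H}$; $\partial\mathcal{A}:=\{\eta\notin\mathcal{A}:\eta\sim\xi\text{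 for some }\xi\in\mathcal{A}\}$; $\partial^\star\mathcal{A}:=\mathcal{F}(\partial\mathcal{A})$. A set is connected if any two of its points are joined by a path inside it. Stable plateaux and cycles. A stable plateau is a nonempty connected set $\mathcal{P}$ with constant energy $\mathbb{H}(\mathcal{P})$ such that $\mathbb{H}>\mathbb{H}(\mathcal{P})$ on $\partial\mathcal{P}$. A cycle is a nonempty connected $\mathcal{C}$ with $\max_{\mathcal{C}}\mathbb{H}<\min_{\partial\mathcal{C}}\mathbb{H}$. Its depth is $\Gamma^{\mathcal{C}}:=\min_{\partial\mathcal{C}}\mathbb{H}-\min_{\mathcal{C}}\mathbb{H}$. General construction (C). Let $\mathscr{C}$ be a collection of pairwise disjoint cycles contained in $\overline{\Omega}$ with $|\mathscr{C}|\ge2$, and let $\Gamma^\star>0$. Put - $\mathscr{C}^\star:=\{\mathcal{C}\in\mathscr{C}:\Gamma^{\mathcal{C}}\ge\Gamma^\star\}$ and $\mathscr{C}^\sharp:=\{\mathcal{C}\in\mathscr{C}:\Gamma^{\mathcal{C}}<\Gamma^\star\}$; - $\mathscr{P}^{\mathscr{C}}:=\{\mathcal{F}(\mathcal{C}):\mathcal{C}\in\mathscr{C}\}$ and $\mathscr{P}^{\mathscr{C}^\star}:=\{\mathcal{F}(\mathcal{C}):\mathcal{C}\in\mathscr{C}^\star\}$; - $\Delta^{\mathscr{C}}:=\overline{\Omega}\setminus\bigcup_{\mathcal{C}\in\mathscr{C}}\mathcal{C}$. Let $\mathfrak{X}^{\mathscr{C}}$ be the continuous-time Markov chain on $\Omega^{\mathscr{C}}:=\Delta^{\mathscr{C}}\cup\mathscr{P}^{\mathscr{C}}$,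 in which each $\mathcal{F}(\mathcal{C})$ is treated as a single point. Its rates are: - $\mathfrak{R}^{\mathscr{C}}(\eta,\xi)=1$ for $\eta,\xi\in\Delta^{\mathscr{C}}$ with $\eta\sim\xi$ and $\mathbb{H}(\xi)\le\mathbb{H}(\eta)$; - $\mathfrak{R}^{\mathscr{C}}(\eta,\mathcal{F}(\mathcal{C}))=|\{\zeta\in\mathcal{C}:\eta\sim\zeta\}|$ for $\eta\in\Delta^{\mathscr{C}}\cap\partial\mathcal{C}$; - $\mathfrak{R}^{\mathscr{C}}(\mathcal{F}(\mathcal{C}),\eta)=|\mathcal{F}(\mathcal{C})|^{-1}|\{\zeta\in\mathcal{C}:\eta\sim\zeta\}|$ if $\Gamma^{\mathcal{C}}\le\Gamma^\star$ and $\eta\in\partial^\star\mathcal{C}$; - all other rates are $0$. The trace chain $\mathfrak{X}^{\mathscr{C}^\star}$ on $\mathscr{P}^{\mathscr{C}^\star}$ has rates, for distinct $\mathcal{C},\mathcal{C}'\in\mathscr{C}^\star$, $$\mathfrak{R}^{\mathscr{C}^\star}(\mathcal{F}(\mathcal{C}),\mathcal{F}(\mathcal{C}')):=\sum_{\eta\in\Delta^{\mathscr{C}}}\mathfrak{R}^{\mathscr{C}}(\mathcal{F}(\mathcal{C}),\eta)\,\mathbf{P}^{\mathscr{C}}_\eta[\mathcal{T}_{\mathcal{F}(\mathcal{C}')}=\mathcal{T}_{\mathscr{P}^{\mathscr{C}^\star}}].$$ Here $\mathbf{P}^{\mathscr{C}}_\eta$ is the law of $\mathfrak{X}^{\mathscr{C}}$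 started at $\eta$, and $\mathcal{T}_{\mathcal{A}}$ is the hitting time of $\mathcal{A}$. Hierarchy. Let $\mathscr{P}^1=\{\mathcal{P}_1^1,\dots,\mathcal{P}^1_{\nu_0}\}$ be the collection of all stable plateaux contained in $\overline{\Omega}$, and assume $\nu_0\ge2$. Suppose that at some level $\mathfrak{h}\ge1$ the sets $\mathcal{P}^{\mathfrak{h}}_1,\dots,\mathcal{P}^{\mathfrak{h}}_{\nu_{\mathfrak{h}-1}}$ are defined, with $\nu_{\mathfrak{h}-1}\ge2$. Then define: - $\mathbb{H}(\mathcal{P}^{\mathfrak{h}}_i):=\min_{\mathcal{P}^{\mathfrak{h}}_i}\mathbb{H}$; - $\mathscr{P}^{\star,\mathfrak{h}}:=\{\mathcal{P}^{\mathfrak{h}}_i:i\in[1,\nu_{\mathfrak{h}-1}]\}$; - $\breve{\mathcal{P}}^{\mathfrak{h}}_i:=\bigcup_{j\ne i}\mathcal{P}^{\mathfrak{h}}_j$; - $\Gamma^{\mathfrak{h}}_i:=\Phi(\mathcal{P}^{\mathfrak{h}}_i,\breve{\mathcal{P}}^{\mathfrak{h}}_i)-\mathbb{H}(\mathcal{P}^{\mathfrak{h}}_i)$ and $\Gamma^{\star,\mathfrak{h}}:=\min_i\Gamma_i^{\mathfrak{h}}$; - $\mathcal{V}^{\mathfrak{h}}_i:=\{\eta\in\Omega:\Phi(\mathcal{P}^{\mathfrak{h}}_i,\eta)-\mathbb{H}(\mathcal{P}^{\mathfrak{h}}_i)<\Gamma^{\mathfrak{h}}_i\}$. Set $\mathscr{C}^1:=\{\mathcal{V}^1_i:i\in[1,\nu_0]\}$.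 For $\mathfrak{h}\ge2$, set $$\mathscr{C}^{\mathfrak{h}}:=\{\mathcal{V}^{\mathfrak{h}}_i:i\in[1,\nu_{\mathfrak{h}-1}]\}\cup\{\mathcal{C}\in\mathscr{C}^{\star,\mathfrak{h}-1}_{\rm tr}\cup\mathscr{C}^{\sharp,\mathfrak{h}-1}:\mathcal{C}\cap\mathcal{V}^{\mathfrak{h}}_i=\emptyset\ \forall i\}.$$ Apply (C) to $(\mathscr{C}^{\mathfrak{h}},\Gamma^{\star,\mathfrak{h}})$. Write $\mathscr{C}^{\star,\mathfrak{h}}:=(\mathscr{C}^{\mathfrak{h}})^\star$ and $\mathscr{C}^{\sharp,\mathfrak{h}}:=(\mathscr{C}^{\mathfrak{h}})^\sharp$. Let $\mathfrak{X}^{\star,\mathfrak{h}}$ be the trace chain of (C) on $\mathscr{P}^{(\mathscr{C}^{\mathfrak{h}})^\star}$. Decompose $\mathscr{P}^{(\mathscr{C}^{\mathfrak{h}})^\star}$ into the closed communicating classes $\mathscr{P}^{\star,\mathfrak{h}}_1,\dots,\mathscr{P}^{\star,\mathfrak{h}}_{\nu_{\mathfrak{h}}}$ of $\mathfrak{X}^{\star,\mathfrak{h}}$ and the set $\mathscr{P}^{\star,\mathfrak{h}}_{\rm tr}$ of transient elements. Let $\mathscr{C}^{\star,\mathfrak{h}}_m:=\{\mathcal{C}\in\mathscr{C}^{\star,\mathfrak{h}}:\mathcal{F}(\mathcal{C})\in\mathscr{P}^{\star,\mathfrak{h}}_m\}$ for $m\in\{1,\dots,\nu_{\mathfrak{h}},{\rm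 tr}\}$. If $\nu_{\mathfrak{h}}\ge2$, define $\mathcal{P}^{\mathfrak{h}+1}_i:=\bigcup_{\mathcal{P}\in\mathscr{P}^{\star,\mathfrak{h}}_i}\mathcal{P}$ for $i\in[1,\nu_{\mathfrak{h}}]$ and continue to level $\mathfrak{h}+1$. The terminal level $\mathfrak{m}$ is the first $\mathfrak{h}$ with $\nu_{\mathfrak{h}}=1$. Finally, $\mathscr{P}^{\star,\mathfrak{h}}_{\rm rec}:=\mathscr{P}^{\star,\mathfrak{h}}_1\cup\dots\cup\mathscr{P}^{\star,\mathfrak{h}}_{\nu_{\mathfrak{h}}}$. Here $[a,b]$ denotes the set of integers from $a$ to $b$. *)

theory Defs
  imports Main "HOL.Real"
begin

text \<open>The finite state space Omega is the universe of a finite type 'a; the graph is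
  given by a symmetric irreflexive adjacency relation E; the energy is H.\<close>

definition is_path :: "('a \<Rightarrow> 'a \<Rightarrow> bool) \<Rightarrow> 'a list \<Rightarrow> 'a \<Rightarrow> 'a \<Rightarrow> bool" where
  "is_path E w x y \<longleftrightarrow> w \<noteq> [] \<and> hd w = x \<and> last w = y \<and> successively E w"

definition path_height :: "('a \<Rightarrow> real) \<Rightarrow> 'a list \<Rightarrow> real" where
  "path_height H w = Max (H ` set w)"

definition Phi :: "('a \<Rightarrow> 'a \<Rightarrow> bool) \<Rightarrow> ('a \<Rightarrow> real) \<Rightarrow> 'a \<Rightarrow> 'a \<Rightarrow> real" where
  "Phi E H x y = Min {path_height H w | w. is_path E w x y}"

definition PhiS :: "('a \<Rightarrow> 'a \<Rightarrow> bool) \<Rightarrow> ('a \<Rightarrow> real) \<Rightarrow> 'a set \<Rightarrow> 'a set \<Rightarrow> real" where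
  "PhiS E H A B = Min {Phi E H x y | x y. x \<in> A \<and> y \<in> B}"

definition ground :: "('a \<Rightarrow> real) \<Rightarrow> 'a set" where
  "ground H = {x. \<forall>y. H x \<le> H y}"

definition Phibar :: "('a \<Rightarrow> 'a \<Rightarrow> bool) \<Rightarrow> ('a \<Rightarrow> real) \<Rightarrow> real" where
  "Phibar E H = Max {Phi E H s s' | s s'. s \<in> ground H \<and> s' \<in> ground H}"

definition Omegabar :: "('a \<Rightarrow> 'a \<Rightarrow> bool) \<Rightarrow> ('a \<Rightarrow> real) \<Rightarrow> 'a set" where
  "Omegabar E H = {x. PhiS E H (ground H) {x} \<le> Phibar E H}"

definition Fmin :: "('a \<Rightarrow> real) \<Rightarrow> 'a set \<Rightarrow> 'a set" where
  "Fmin H A = {x \<in> A. \<forall>y\<in>A. H x \<le> H y}"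

definition bdry :: "('a \<Rightarrow> 'a \<Rightarrow> bool) \<Rightarrow> 'a set \<Rightarrow> 'a set" where
  "bdry E A = {x. x \<notin> A \<and> (\<exists>y\<in>A. E x y)}"

definition bdry_star :: "('a \<Rightarrow> 'a \<Rightarrow> bool) \<Rightarrow> ('a \<Rightarrow> real) \<Rightarrow> 'a set \<Rightarrow> 'a set" where
  "bdry_star E H A = Fmin H (bdry E A)"

definition connected_set :: "('a \<Rightarrow> 'a \<Rightarrow> bool) \<Rightarrow> 'a set \<Rightarrow> bool" where
  "connected_set E A \<longleftrightarrow> (\<forall>x\<in>A. \<forall>y\<in>A. \<exists>w. is_path E w x y \<and> set w \<subseteq> A)"

definition stable_plateau :: "('a \<Rightarrow> 'a \<Rightarrow> bool) \<Rightarrow> ('a \<Rightarrow> real) \<Rightarrow> 'a set \<Rightarrow> bool" where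
  "stable_plateau E H P \<longleftrightarrow> P \<noteq> {} \<and> connected_set E P \<and> (\<forall>x\<in>P. \<forall>y\<in>P. H x = H y)
     \<and> (\<forall>x\<in>P. \<forall>y\<in>bdry E P. H x < H y)"

text \<open>max over C of H < min over the boundary of H (vacuous if the boundary is empty).\<close>
definition is_cycle :: "('a \<Rightarrow> 'a \<Rightarrow> bool) \<Rightarrow> ('a \<Rightarrow> real) \<Rightarrow> 'a set \<Rightarrow> bool" where
  "is_cycle E H C \<longleftrightarrow> C \<noteq> {} \<and> connected_set E C \<and> (\<forall>x\<in>C. \<forall>y\<in>bdry E C. H x < H y)"

definition depth :: "('a \<Rightarrow> 'a \<Rightarrow> bool) \<Rightarrow> ('a \<Rightarrow> real) \<Rightarrow> 'a set \<Rightarrow> real" where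
  "depth E H C = Min (H ` bdry E C) - Min (H ` C)"

definition Cstar :: "('a \<Rightarrow> 'a \<Rightarrow> bool) \<Rightarrow> ('a \<Rightarrow> real) \<Rightarrow> 'a set set \<Rightarrow> real \<Rightarrow> 'a set set" where
  "Cstar E H CC g = {C \<in> CC. depth E H C \<ge> g}"

definition Csharp :: "('a \<Rightarrow> 'a \<Rightarrow> bool) \<Rightarrow> ('a \<Rightarrow> real) \<Rightarrow> 'a set set \<Rightarrow> real \<Rightarrow> 'a set set" where
  "Csharp E H CC g = {C \<in> CC. depth E H C < g}"

definition Delta :: "('a \<Rightarrow> 'a \<Rightarrow> bool) \<Rightarrow> ('a \<Rightarrow> real) \<Rightarrow> 'a set set \<Rightarrow> 'a set" where
  "Delta E H CC = Omegabar E H - \<Union>CC"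

text \<open>States of the collapsed chain: points of Delta, and bottoms F(C) collapsed to one point.\<close>
datatype 'a st = Pt 'a | Pl "'a set"

definition states :: "('a \<Rightarrow> 'a \<Rightarrow> bool) \<Rightarrow> ('a \<Rightarrow> real) \<Rightarrow> 'a set set \<Rightarrow> 'a st set" where
  "states E H CC = Pt ` Delta E H CC \<union> Pl ` (Fmin H ` CC)"

fun rate :: "('a \<Rightarrow> 'a \<Rightarrow> bool) \<Rightarrow> ('a \<Rightarrow> real) \<Rightarrow> 'a set set \<Rightarrow> real \<Rightarrow> 'a st \<Rightarrow> 'a st \<Rightarrow> real" where
  "rate E H CC g (Pt x) (Pt y) =
     (if x \<in> Delta E H CC \<and> y \<in> Delta E H CC \<and> E x y \<and> H y \<le> H x then 1 else 0)"
| "rate E H CC g (Pt x) (Pl P) =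
     (if x \<in> Delta E H CC then
        (\<Sum>C\<in>{C \<in> CC. Fmin H C = P}. if x \<in> bdry E C then real (card {z \<in> C. E x z}) else 0)
      else 0)"
| "rate E H CC g (Pl P) (Pt y) =
     (if y \<in> Delta E H CC then
        (\<Sum>C\<in>{C \<in> CC. Fmin H C = P}.
           if depth E H C \<le> g \<and> y \<in> bdry_star E H C
           then real (card {z \<in> C. E y z}) / real (card P) else 0)
      else 0)"
| "rate E H CC g (Pl P) (Pl Q) = 0"

text \<open>Embedded jump chain (hitting probabilities of the continuous-time chain coincide
  with those of its jump chain). Absorbing states (total rate 0) never move.\<close>
definition jump :: "('a \<Rightarrow> 'a \<Rightarrow> bool) \<Rightarrow> ('a \<Rightarrow> real) \<Rightarrow> 'a set set \<Rightarrow> real \<Rightarrow> 'a st \<Rightarrow> 'a st \<Rightarrow> real" where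
  "jump E H CC g x y = rate E H CC g x y / (\<Sum>z\<in>states E H CC. rate E H CC g x z)"

text \<open>hit_step^n applied to 0: probability that the hitting time of A is at most n steps
  and the chain enters A at the state t.\<close>
definition hit_step :: "('a \<Rightarrow> 'a \<Rightarrow> bool) \<Rightarrow> ('a \<Rightarrow> real) \<Rightarrow> 'a set set \<Rightarrow> real \<Rightarrow> 'a st set \<Rightarrow> 'a st
    \<Rightarrow> ('a st \<Rightarrow> real) \<Rightarrow> 'a st \<Rightarrow> real" where
  "hit_step E H CC g A t f x =
     (if x \<in> A then (if x = t then 1 else 0)
      else (\<Sum>y\<in>states E H CC. jump E H CC g x y * f y))"

text \<open>P_x[T_t = T_A < infinity]\<close>
definition hit_prob :: "('a \<Rightarrow> 'a \<Rightarrow> bool) \<Rightarrow> ('a \<Rightarrow> real) \<Rightarrow> 'a set set \<Rightarrow> real \<Rightarrow> 'a st set \<Rightarrow> 'a st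
    \<Rightarrow> 'a st \<Rightarrow> real" where
  "hit_prob E H CC g A t x = (SUP n. ((hit_step E H CC g A t ^^ n) (\<lambda>_. 0)) x)"

definition trace_rate :: "('a \<Rightarrow> 'a \<Rightarrow> bool) \<Rightarrow> ('a \<Rightarrow> real) \<Rightarrow> 'a set set \<Rightarrow> real \<Rightarrow> 'a set \<Rightarrow> 'a set \<Rightarrow> real" where
  "trace_rate E H CC g P Q =
     (\<Sum>y\<in>Delta E H CC. rate E H CC g (Pl P) (Pt y)
        * hit_prob E H CC g (Pl ` (Fmin H ` Cstar E H CC g)) (Pl Q) (Pt y))"

definition Pstar :: "('a \<Rightarrow> 'a \<Rightarrow> bool) \<Rightarrow> ('a \<Rightarrow> real) \<Rightarrow> 'a set set \<Rightarrow> real \<Rightarrow> 'a set set" where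
  "Pstar E H CC g = Fmin H ` Cstar E H CC g"

definition reach :: "('a \<Rightarrow> 'a \<Rightarrow> bool) \<Rightarrow> ('a \<Rightarrow> real) \<Rightarrow> 'a set set \<Rightarrow> real \<Rightarrow> 'a set \<Rightarrow> 'a set \<Rightarrow> bool" where
  "reach E H CC g = (\<lambda>P Q. P \<in> Pstar E H CC g \<and> Q \<in> Pstar E H CC g \<and> P \<noteq> Q
                              \<and> trace_rate E H CC g P Q > 0)\<^sup>*\<^sup>*"

definition closed_classes :: "('a \<Rightarrow> 'a \<Rightarrow> bool) \<Rightarrow> ('a \<Rightarrow> real) \<Rightarrow> 'a set set \<Rightarrow> real \<Rightarrow> 'a set set set" where
  "closed_classes E H CC g =
     {{Q \<in> Pstar E H CC g. reach E H CC g P Q \<and> reach E H CC g Q P} | P.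
        P \<in> Pstar E H CC g \<and> (\<forall>Q. reach E H CC g P Q \<longrightarrow> reach E H CC g Q P)}"

definition transient :: "('a \<Rightarrow> 'a \<Rightarrow> bool) \<Rightarrow> ('a \<Rightarrow> real) \<Rightarrow> 'a set set \<Rightarrow> real \<Rightarrow> 'a set set" where
  "transient E H CC g = Pstar E H CC g - \<Union>(closed_classes E H CC g)"

text \<open>A level is described by the family Ps of the sets P^h_i and by the family prev of
  cycles C^{*,h-1}_tr \<union> C^{#,h-1} inherited from the previous level (empty at level 1).\<close>

definition Hmin :: "('a \<Rightarrow> real) \<Rightarrow> 'a set \<Rightarrow> real" where
  "Hmin H P = Min (H ` P)"

definition Gam :: "('a \<Rightarrow> 'a \<Rightarrow> bool) \<Rightarrow> ('a \<Rightarrow> real) \<Rightarrow> 'a set set \<Rightarrow> 'a set \<Rightarrow> real" where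
  "Gam E H Ps P = PhiS E H P (\<Union>(Ps - {P})) - Hmin H P"

definition Gstar :: "('a \<Rightarrow> 'a \<Rightarrow> bool) \<Rightarrow> ('a \<Rightarrow> real) \<Rightarrow> 'a set set \<Rightarrow> real" where
  "Gstar E H Ps = Min (Gam E H Ps ` Ps)"

definition Vset :: "('a \<Rightarrow> 'a \<Rightarrow> bool) \<Rightarrow> ('a \<Rightarrow> real) \<Rightarrow> 'a set set \<Rightarrow> 'a set \<Rightarrow> 'a set" where
  "Vset E H Ps P = {x. PhiS E H P {x} - Hmin H P < Gam E H Ps P}"

definition level_cycles :: "('a \<Rightarrow> 'a \<Rightarrow> bool) \<Rightarrow> ('a \<Rightarrow> real) \<Rightarrow> 'a set set \<times> 'a set set \<Rightarrow> 'a set set" where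
  "level_cycles E H L = (let Ps = fst L; prev = snd L in
     Vset E H Ps ` Ps \<union> {C \<in> prev. \<forall>P\<in>Ps. C \<inter> Vset E H Ps P = {}})"

definition level_classes :: "('a \<Rightarrow> 'a \<Rightarrow> bool) \<Rightarrow> ('a \<Rightarrow> real) \<Rightarrow> 'a set set \<times> 'a set set \<Rightarrow> 'a set set set" where
  "level_classes E H L = closed_classes E H (level_cycles E H L) (Gstar E H (fst L))"

definition next_level :: "('a \<Rightarrow> 'a \<Rightarrow> bool) \<Rightarrow> ('a \<Rightarrow> real) \<Rightarrow> 'a set set \<times> 'a set set \<Rightarrow> 'a set set \<times> 'a set set" where
  "next_level E H L = (let CC = level_cycles E H L; g = Gstar E H (fst L) in
     ((\<lambda>K. \<Union>K) ` closed_classes E H CC g,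
      {C \<in> Cstar E H CC g. Fmin H C \<in> transient E H CC g} \<union> Csharp E H CC g))"

definition plateaux1 :: "('a \<Rightarrow> 'a \<Rightarrow> bool) \<Rightarrow> ('a \<Rightarrow> real) \<Rightarrow> 'a set set" where
  "plateaux1 E H = {P. stable_plateau E H P \<and> P \<subseteq> Omegabar E H}"

text \<open>Data of level h (for h \<ge> 1).\<close>
definition level :: "('a \<Rightarrow> 'a \<Rightarrow> bool) \<Rightarrow> ('a \<Rightarrow> real) \<Rightarrow> nat \<Rightarrow> 'a set set \<times> 'a set set" where
  "level E H h = (next_level E H ^^ (h - 1)) (plateaux1 E H, {})"

definition nu :: "('a \<Rightarrow> 'a \<Rightarrow> bool) \<Rightarrow> ('a \<Rightarrow> real) \<Rightarrow> nat \<Rightarrow> nat" where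
  "nu E H h = card (level_classes E H (level E H h))"

end

theory Submission
  imports Defs
begin


locale gr =
  fixes E :: "'a::finite \<Rightarrow> 'a \<Rightarrow> bool" and H :: "'a \<Rightarrow> real"
  assumes symE: "symp E" and conn: "\<forall>x y. E\<^sup>*\<^sup>* x y"
begin

lemma path_exists: "\<exists>w. is_path E w x y"
proof -
  have "E\<^sup>*\<^sup>* x y" using conn by blast
  then show ?thesis
  proof (induction rule: rtranclp_induct)
    case base
    then show ?case by (rule exI[of _ "[x]"]) (simp add: is_path_def)
  next
    case (step y z)
    then obtain w where w: "is_path E w x y" by blast
    then have "is_path E (w @ [z]) x z" using step(2)
      by (auto simp: is_path_def successively_append_iff)
    then show ?case by blast
  qed
qed

lemma ne_imp: "a \<in> A \<Longrightarrow> A \<noteq> {}" by auto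

lemma height_mem: "w \<noteq> [] \<Longrightarrow> path_height H w \<in> H ` set w"
  unfolding path_height_def by (rule Max_in) auto

lemma height_ge: "z \<in> set w \<Longrightarrow> H z \<le> path_height H w"
  unfolding path_height_def by (rule Max_ge) auto

lemma heights_finite: "finite {path_height H w | w. is_path E w x y}"
proof -
  have "{path_height H w | w. is_path E w x y} \<subseteq> range H"
  proof
    fix h assume "h \<in> {path_height H w | w. is_path E w x y}"
    then obtain w where "h = path_height H w" "is_path E w x y" by blast
    then have "w \<noteq> []" "h = path_height H w" by (simp_all add: is_path_def)
    then show "h \<in> range H" using height_mem[of w] by auto
  qed
  then show ?thesis by (rule finite_subset) simp
qed

lemma heights_ne: "{path_height H w | w. is_path E w x y} \<noteq> {}"
proof -
  obtain w where "is_path E w x y" using path_exists by blast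
  then have "path_height H w \<in> {path_height H w | w. is_path E w x y}" by blast
  then show ?thesis by (rule ne_imp)
qed

lemma Phi_le: "is_path E w x y \<Longrightarrow> Phi E H x y \<le> path_height H w"
  unfolding Phi_def by (rule Min_le[OF heights_finite]) blast

lemma Phi_obtain: "\<exists>w. is_path E w x y \<and> Phi E H x y = path_height H w"
proof -
  have "Phi E H x y \<in> {path_height H w | w. is_path E w x y}"
    unfolding Phi_def by (rule Min_in[OF heights_finite heights_ne])
  then show ?thesis by blast
qed

lemma Phi_geI: "(\<And>w. is_path E w x y \<Longrightarrow> c \<le> path_height H w) \<Longrightarrow> c \<le> Phi E H x y"
proof -
  assume a: "\<And>w. is_path E w x y \<Longrightarrow> c \<le> path_height H w"
  obtain w where "is_path E w x y" "Phi E H x y = path_height H w" using Phi_obtain by blast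
  then show ?thesis using a by simp
qed

lemma Phi_gtI: "(\<And>w. is_path E w x y \<Longrightarrow> c < path_height H w) \<Longrightarrow> c < Phi E H x y"
proof -
  assume a: "\<And>w. is_path E w x y \<Longrightarrow> c < path_height H w"
  obtain w where "is_path E w x y" "Phi E H x y = path_height H w" using Phi_obtain by blast
  then show ?thesis using a by simp
qed

lemma Phi_refl_le: "Phi E H x x \<le> H x"
proof -
  have "is_path E [x] x x" by (simp add: is_path_def)
  from Phi_le[OF this] show ?thesis by (simp add: path_height_def)
qed

lemma Phi_ge1: "H x \<le> Phi E H x y"
proof (rule Phi_geI)
  fix w assume "is_path E w x y"
  then have "x \<in> set w" unfolding is_path_def using hd_in_set by blast
  then show "H x \<le> path_height H w" by (rule height_ge)
qed

lemma Phi_ge2: "H y \<le> Phi E H x y"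
proof (rule Phi_geI)
  fix w assume "is_path E w x y"
  then have "y \<in> set w" unfolding is_path_def using last_in_set by blast
  then show "H y \<le> path_height H w" by (rule height_ge)
qed

lemma Phi_refl: "Phi E H x x = H x"
  using Phi_refl_le Phi_ge1 by (simp add: order_antisym)

lemma path_append:
  assumes "is_path E w1 x y" "is_path E w2 y z"
  shows "is_path E (w1 @ tl w2) x z"
proof -
  obtain a r where w2: "w2 = a # r" using assms(2) by (cases w2) (auto simp: is_path_def)
  have "a = y" using assms(2) w2 by (simp add: is_path_def)
  show ?thesis
  proof (cases "r = []")
    case True
    then show ?thesis using assms w2 by (auto simp: is_path_def)
  next
    case False
    then show ?thesis using assms w2 \<open>a = y\<close>
      by (auto simp: is_path_def successively_append_iff successively_Cons last_append)
  qed
qed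

lemma height_append: "w1 \<noteq> [] \<Longrightarrow> path_height H (w1 @ tl w2) \<le> max (path_height H w1) (path_height H w2)"
proof -
  assume ne: "w1 \<noteq> []"
  have "H z \<le> max (path_height H w1) (path_height H w2)" if z: "z \<in> set (w1 @ tl w2)" for z
  proof -
    have "z \<in> set w1 \<or> z \<in> set w2" using z by (cases w2) auto
    then show ?thesis using height_ge[of z w1] height_ge[of z w2] by linarith
  qed
  then show ?thesis unfolding path_height_def using ne by (subst Max_le_iff) auto
qed

lemma Phi_trans: "Phi E H x z \<le> max (Phi E H x y) (Phi E H y z)"
proof -
  obtain w1 where w1: "is_path E w1 x y" "Phi E H x y = path_height H w1" using Phi_obtain by blast
  obtain w2 where w2: "is_path E w2 y z" "Phi E H y z = path_height H w2" using Phi_obtain by blast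
  have "Phi E H x z \<le> path_height H (w1 @ tl w2)" by (rule Phi_le[OF path_append[OF w1(1) w2(1)]])
  also have "\<dots> \<le> max (Phi E H x y) (Phi E H y z)"
    using height_append w1 w2 by (auto simp: is_path_def)
  finally show ?thesis .
qed

lemma Phi_sym_le: "Phi E H y x \<le> Phi E H x y"
proof -
  obtain w where w: "is_path E w x y" "Phi E H x y = path_height H w" using Phi_obtain by blast
  have "is_path E (rev w) y x" using w(1) symE
    by (auto simp: is_path_def hd_rev last_rev symp_def elim: successively_mono)
  then have "Phi E H y x \<le> path_height H (rev w)" by (rule Phi_le)
  then show ?thesis using w by (simp add: path_height_def)
qed

lemma Phi_sym: "Phi E H x y = Phi E H y x"
  using Phi_sym_le by (simp add: order_antisym)

lemma Phi_edge: "E y z \<Longrightarrow> Phi E H x z \<le> max (Phi E H x y) (H z)"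
proof -
  assume e: "E y z"
  have "is_path E [y, z] y z" using e by (simp add: is_path_def)
  then have "Phi E H y z \<le> path_height H [y, z]" by (rule Phi_le)
  then have "Phi E H y z \<le> max (H y) (H z)" by (simp add: path_height_def)
  then have "Phi E H y z \<le> max (Phi E H x y) (H z)" using Phi_ge2[of y x] by linarith
  then show ?thesis using Phi_trans[of x z y] by linarith
qed

lemma path_exit: "is_path E w x y \<Longrightarrow> x \<in> C \<Longrightarrow> y \<notin> C \<Longrightarrow> \<exists>z\<in>set w. z \<in> bdry E C"
proof (induction w arbitrary: x)
  case Nil then show ?case by (simp add: is_path_def)
next
  case (Cons a r)
  then have a: "a = x" by (simp add: is_path_def)
  show ?case
  proof (cases r)
    case Nil then show ?thesis using Cons by (auto simp: is_path_def)
  next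
    case (Cons b r')
    have pr: "is_path E r b y" using Cons.prems Cons by (auto simp: is_path_def)
    have eab: "E a b" using Cons.prems Cons by (auto simp: is_path_def)
    show ?thesis
    proof (cases "b \<in> C")
      case True then show ?thesis using Cons.IH[OF pr True Cons.prems(3)] by auto
    next
      case False
      then have "b \<in> bdry E C" using eab a Cons.prems(2) symE
        by (auto simp: bdry_def symp_def)
      then show ?thesis using Cons by auto
    qed
  qed
qed

lemma Phi_exit:
  assumes "x \<in> C" "y \<notin> C"
  shows "bdry E C \<noteq> {}" "Min (H ` bdry E C) \<le> Phi E H x y"
proof -
  obtain w where w: "is_path E w x y" "Phi E H x y = path_height H w" using Phi_obtain by blast
  obtain z where z: "z \<in> set w" "z \<in> bdry E C" using path_exit[OF w(1) assms] by blast
  show "bdry E C \<noteq> {}" using z by blast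
  have "Min (H ` bdry E C) \<le> H z" using z by (intro Min_le) auto
  also have "\<dots> \<le> Phi E H x y" using w z height_ge by auto
  finally show "Min (H ` bdry E C) \<le> Phi E H x y" .
qed

lemma PhiS_fin: "finite {Phi E H x y | x y. x \<in> A \<and> y \<in> B}"
proof -
  have "{Phi E H x y | x y. x \<in> A \<and> y \<in> B} \<subseteq> range (\<lambda>(x,y). Phi E H x y)" by auto
  then show ?thesis by (rule finite_subset) simp
qed

lemma PhiS_le: "a \<in> A \<Longrightarrow> b \<in> B \<Longrightarrow> PhiS E H A B \<le> Phi E H a b"
  unfolding PhiS_def by (rule Min_le[OF PhiS_fin]) blast

lemma PhiS_obtain: "A \<noteq> {} \<Longrightarrow> B \<noteq> {} \<Longrightarrow> \<exists>a\<in>A. \<exists>b\<in>B. PhiS E H A B = Phi E H a b"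
proof -
  assume "A \<noteq> {}" "B \<noteq> {}"
  then have "{Phi E H x y | x y. x \<in> A \<and> y \<in> B} \<noteq> {}" by blast
  then have "PhiS E H A B \<in> {Phi E H x y | x y. x \<in> A \<and> y \<in> B}"
    unfolding PhiS_def by (rule Min_in[OF PhiS_fin])
  then show ?thesis by blast
qed

end


lemma sum_pos_ex: "0 < sum f A \<Longrightarrow> \<exists>x\<in>A. 0 < (f x::real)"
proof (rule ccontr)
  assume a: "0 < sum f A" "\<not> (\<exists>x\<in>A. 0 < f x)"
  then have "sum f A \<le> 0" by (intro sum_nonpos) (simp add: not_less)
  then show False using a by simp
qed

lemma Fmin_sub: "Fmin H C \<subseteq> C" by (auto simp: Fmin_def)

lemma Fmin_H: "finite C \<Longrightarrow> x \<in> Fmin H C \<Longrightarrow> H x = Min (H ` C)"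
  unfolding Fmin_def by (intro Min_eqI[symmetric]) auto

lemma Fmin_I: "finite C \<Longrightarrow> x \<in> C \<Longrightarrow> H x = Min (H ` C) \<Longrightarrow> x \<in> Fmin H C"
  unfolding Fmin_def by auto

lemma Fmin_ne: "finite C \<Longrightarrow> C \<noteq> {} \<Longrightarrow> Fmin H C \<noteq> {}"
proof -
  assume f: "finite C" and ne: "C \<noteq> {}"
  have "Min (H ` C) \<in> H ` C" using f ne by (intro Min_in) auto
  then obtain x where "x \<in> C" "H x = Min (H ` C)" by auto
  then have "x \<in> Fmin H C" using f by (intro Fmin_I)
  then show ?thesis by blast
qed

locale lev = gr E H for E :: "'a::finite \<Rightarrow> 'a \<Rightarrow> bool" and H +
  fixes CC :: "'a set set" and g :: real
  assumes CCne: "\<forall>C\<in>CC. C \<noteq> {}"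
    and CCdisj: "\<forall>C1\<in>CC. \<forall>C2\<in>CC. C1 \<noteq> C2 \<longrightarrow> C1 \<inter> C2 = {}"
begin

abbreviation "ST \<equiv> states E H CC"
abbreviation "AA \<equiv> Pl ` (Fmin H ` Cstar E H CC g)"
abbreviation "DD \<equiv> Delta E H CC"
abbreviation "R \<equiv> rate E H CC g"

definition stepR :: "'a st set \<Rightarrow> 'a st \<Rightarrow> 'a st \<Rightarrow> bool" where
  "stepR A u w \<longleftrightarrow> u \<notin> A \<and> w \<in> ST \<and> R u w > 0"

lemma cyc_unique: "C1 \<in> CC \<Longrightarrow> C2 \<in> CC \<Longrightarrow> Fmin H C1 = Fmin H C2 \<Longrightarrow> C1 = C2"
proof (rule ccontr)
  assume a: "C1 \<in> CC" "C2 \<in> CC" "Fmin H C1 = Fmin H C2" "C1 \<noteq> C2"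
  have "Fmin H C1 \<noteq> {}" using a CCne by (intro Fmin_ne) auto
  then obtain x where "x \<in> Fmin H C1" by blast
  then have "x \<in> C1 \<inter> C2" using a Fmin_sub by (metis IntI subsetD)
  then show False using a CCdisj by blast
qed

definition cyc :: "'a set \<Rightarrow> 'a set" where
  "cyc Q = (SOME C. C \<in> CC \<and> Fmin H C = Q)"

lemma cyc_eq: assumes "C \<in> CC" shows "cyc (Fmin H C) = C"
  unfolding cyc_def
proof (rule someI2[of _ C])
  show "C \<in> CC \<and> Fmin H C = Fmin H C" using assms by simp
  fix C' assume "C' \<in> CC \<and> Fmin H C' = Fmin H C"
  then show "C' = C" using cyc_unique assms by blast
qed

definition lv :: "'a st \<Rightarrow> real" where
  "lv u = (case u of Pt x \<Rightarrow> H x | Pl Q \<Rightarrow> Min (H ` bdry E (cyc Q)))"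

lemma finite_ST: "finite ST"
  unfolding states_def by simp

lemma rate_nonneg: "0 \<le> R u w"
  by (cases u; cases w) (auto intro!: sum_nonneg divide_nonneg_nonneg)

lemma rate_PtPt: "R (Pt x) (Pt y) > 0 \<longleftrightarrow> x \<in> DD \<and> y \<in> DD \<and> E x y \<and> H y \<le> H x"
  by simp

lemma rate_PtPl_pos:
  assumes "R (Pt x) (Pl Q) > 0"
  shows "x \<in> DD \<and> (\<exists>C\<in>CC. Fmin H C = Q \<and> x \<in> bdry E C)"
proof -
  have x: "x \<in> DD" using assms by (simp split: if_splits)
  have "\<exists>C\<in>{C \<in> CC. Fmin H C = Q}. x \<in> bdry E C"
  proof (rule ccontr)
    assume "\<not> ?thesis"
    then have "(\<Sum>C\<in>{C \<in> CC. Fmin H C = Q}. if x \<in> bdry E C then real (card {z \<in> C. E x z}) else 0) \<le> 0"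
      by (intro sum_nonpos) auto
    then show False using assms x by simp
  qed
  then show ?thesis using x by auto
qed

lemma rate_PtPl_posI:
  assumes "x \<in> DD" "C \<in> CC" "x \<in> bdry E C"
  shows "R (Pt x) (Pl (Fmin H C)) > 0"
proof -
  obtain z where z: "z \<in> C" "E x z" using assms(3) by (auto simp: bdry_def)
  have "card {z \<in> C. E x z} > 0" using z by (auto simp: card_gt_0_iff)
  then have "0 < (if x \<in> bdry E C then real (card {z \<in> C. E x z}) else 0)" using assms by simp
  also have "\<dots> \<le> (\<Sum>C'\<in>{C' \<in> CC. Fmin H C' = Fmin H C}. if x \<in> bdry E C' then real (card {z \<in> C'. E x z}) else 0)"
    using assms(2) by (intro member_le_sum) auto
  finally show ?thesis using assms(1) by simp
qed

lemma rate_PlPt_eq: "y \<in> DD \<Longrightarrow> R (Pl Q) (Pt y) = (\<Sum>C\<in>{C \<in> CC. Fmin H C = Q}.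
           if depth E H C \<le> g \<and> y \<in> bdry_star E H C
           then real (card {z \<in> C. E y z}) / real (card Q) else 0)"
  by (simp only: rate.simps if_True)

lemma rate_PlPt_pos:
  assumes "R (Pl Q) (Pt y) > 0"
  shows "y \<in> DD \<and> (\<exists>C\<in>CC. Fmin H C = Q \<and> depth E H C \<le> g \<and> y \<in> bdry_star E H C)"
proof -
  have y: "y \<in> DD"
  proof (rule ccontr)
    assume "y \<notin> DD" then have "R (Pl Q) (Pt y) = 0" by simp
    then show False using assms by simp
  qed
  obtain C where C: "C \<in> {C \<in> CC. Fmin H C = Q}" "0 < (if depth E H C \<le> g \<and> y \<in> bdry_star E H C
           then real (card {z \<in> C. E y z}) / real (card Q) else 0)"
    using sum_pos_ex[OF assms[unfolded rate_PlPt_eq[OF y]]] by (elim bexE) 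
  have "depth E H C \<le> g \<and> y \<in> bdry_star E H C"
  proof (rule ccontr)
    assume "\<not> ?thesis" then show False using C(2) by (simp only: if_False)
  qed
  then show ?thesis using y C(1) by blast
qed

lemma rate_PlPt_posI:
  assumes "y \<in> DD" "C \<in> CC" "depth E H C \<le> g" "y \<in> bdry_star E H C"
  shows "R (Pl (Fmin H C)) (Pt y) > 0"
proof -
  have "y \<in> bdry E C" using Fmin_sub[of H "bdry E C"] assms(4) unfolding bdry_star_def by (rule subsetD)
  then obtain z where z: "z \<in> C" "E y z" by (auto simp: bdry_def)
  have c1: "card {z \<in> C. E y z} > 0" using z by (auto simp: card_gt_0_iff)
  have "Fmin H C \<noteq> {}" using assms(2) CCne by (intro Fmin_ne) auto
  then have c2: "card (Fmin H C) > 0" by (simp add: card_gt_0_iff)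
  have "0 < real (card {z \<in> C. E y z}) / real (card (Fmin H C))" using c1 c2 by simp
  also have "\<dots> = (if depth E H C \<le> g \<and> y \<in> bdry_star E H C
           then real (card {z \<in> C. E y z}) / real (card (Fmin H C)) else 0)"
    by (rule if_P[symmetric]) (use assms in blast)
  also have "\<dots> \<le> (\<Sum>C'\<in>{C' \<in> CC. Fmin H C' = Fmin H C}.
           if depth E H C' \<le> g \<and> y \<in> bdry_star E H C'
           then real (card {z \<in> C'. E y z}) / real (card (Fmin H C)) else 0)"
    using assms(2) by (intro member_le_sum) (auto intro!: divide_nonneg_nonneg)
  also have "\<dots> = R (Pl (Fmin H C)) (Pt y)" by (rule rate_PlPt_eq[OF assms(1), symmetric])
  finally show ?thesis .
qed

lemma jump_nonneg: "0 \<le> jump E H CC g x y"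
  unfolding jump_def using rate_nonneg by (intro divide_nonneg_nonneg sum_nonneg) auto

lemma jump_pos: "w \<in> ST \<Longrightarrow> R x w > 0 \<Longrightarrow> jump E H CC g x w > 0"
proof -
  assume w: "w \<in> ST" and r: "R x w > 0"
  have "R x w \<le> (\<Sum>z\<in>ST. R x z)" using w finite_ST rate_nonneg by (intro member_le_sum) auto
  then show ?thesis unfolding jump_def using r by simp
qed

lemma jump_pos_rate: "jump E H CC g x w > 0 \<Longrightarrow> R x w > 0"
  unfolding jump_def using rate_nonneg[of x w]
  by (metis div_0 less_eq_real_def)

lemma div_self_le1: "(S::real) / S \<le> 1" by (cases "S = 0") auto

lemma jump_sum: "(\<Sum>y\<in>ST. jump E H CC g x y) \<le> 1"
proof -
  have "(\<Sum>y\<in>ST. jump E H CC g x y) = (\<Sum>y\<in>ST. R x y) / (\<Sum>z\<in>ST. R x z)"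
    unfolding jump_def by (rule sum_divide_distrib[symmetric])
  also have "\<dots> \<le> 1" by (rule div_self_le1)
  finally show ?thesis .
qed

abbreviation "it A t n \<equiv> (hit_step E H CC g A t ^^ n) (\<lambda>_. 0)"

lemma hs_in: "x \<in> A \<Longrightarrow> hit_step E H CC g A t f x = (if x = t then 1 else 0)"
  by (simp add: hit_step_def)

lemma hs_out: "x \<notin> A \<Longrightarrow> hit_step E H CC g A t f x = (\<Sum>y\<in>ST. jump E H CC g x y * f y)"
  by (simp add: hit_step_def)

lemma it_Suc: "it A t (Suc n) x = hit_step E H CC g A t (it A t n) x"
  by simp

lemma it_bounds: "0 \<le> it A t n x \<and> it A t n x \<le> 1"
proof (induction n arbitrary: x)
  case 0 then show ?case by simp
next
  case (Suc n)
  show ?case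
  proof (cases "x \<in> A")
    case True then show ?thesis by (simp add: hs_in hs_out)
  next
    case False
    have "0 \<le> (\<Sum>y\<in>ST. jump E H CC g x y * it A t n y)"
      using Suc jump_nonneg by (intro sum_nonneg mult_nonneg_nonneg) auto
    moreover have "(\<Sum>y\<in>ST. jump E H CC g x y * it A t n y) \<le> (\<Sum>y\<in>ST. jump E H CC g x y)"
      using Suc jump_nonneg by (intro sum_mono mult_right_le_one_le) auto
    ultimately show ?thesis using False jump_sum[of x] by (simp add: hs_in hs_out)
  qed
qed

lemma hit_prob_ge: "it A t n x \<le> hit_prob E H CC g A t x"
  unfolding hit_prob_def by (rule cSUP_upper) (auto intro!: bdd_aboveI2 it_bounds[THEN conjunct2])

lemma hit_prob_nonneg: "0 \<le> hit_prob E H CC g A t x"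
  using hit_prob_ge[where n=0 and A=A and t=t and x=x] by simp

lemma hit_prob_pos: "hit_prob E H CC g A t x > 0 \<Longrightarrow> \<exists>n. it A t n x > 0"
proof (rule ccontr)
  assume p: "hit_prob E H CC g A t x > 0" and "\<not> (\<exists>n. it A t n x > 0)"
  then have "\<forall>n. it A t n x \<le> 0" by (simp add: not_less)
  then have "hit_prob E H CC g A t x \<le> 0" unfolding hit_prob_def by (intro cSUP_least) auto
  then show False using p by simp
qed

lemma it_pos_path: "it A t n x > 0 \<Longrightarrow> (stepR A)\<^sup>*\<^sup>* x t \<and> t \<in> A"
proof (induction n arbitrary: x)
  case 0 then show ?case by simp
next
  case (Suc n)
  show ?case
  proof (cases "x \<in> A")
    case True then show ?thesis using Suc.prems by (simp add: hs_in hs_out split: if_splits)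
  next
    case False
    then have "0 < (\<Sum>y\<in>ST. jump E H CC g x y * it A t n y)" using Suc.prems by (simp add: hs_in hs_out)
    then obtain y where y: "y \<in> ST" "0 < jump E H CC g x y * it A t n y"
      using sum_pos_ex by blast
    have "jump E H CC g x y > 0" "it A t n y > 0"
      using y(2) jump_nonneg[of x y] it_bounds[where n=n and A=A and t=t and x=y] by (auto simp: zero_less_mult_iff)
    then have "stepR A x y" 
      using False y(1) jump_pos_rate by (auto simp: stepR_def)
    moreover have "(stepR A)\<^sup>*\<^sup>* y t \<and> t \<in> A" using Suc.IH \<open>it A t n y > 0\<close> by blast
    ultimately show ?thesis by (meson converse_rtranclp_into_rtranclp)
  qed
qed

lemma path_it_pos: "(stepR A)\<^sup>*\<^sup>* x t \<Longrightarrow> t \<in> A \<Longrightarrow> \<exists>n. it A t n x > 0"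
proof (induction rule: converse_rtranclp_induct)
  case base
  have "it A t 1 t = 1" using base by (simp add: hs_in hs_out)
  then show ?case by (metis zero_less_one)
next
  case (step x y)
  then obtain n where n: "it A t n y > 0" by blast
  have s: "x \<notin> A" "y \<in> ST" "R x y > 0" using step(1) by (auto simp: stepR_def)
  have "0 < jump E H CC g x y * it A t n y" using jump_pos[OF s(2,3)] n by simp
  also have "\<dots> \<le> (\<Sum>z\<in>ST. jump E H CC g x z * it A t n z)"
    using s(2) finite_ST jump_nonneg it_bounds by (intro member_le_sum mult_nonneg_nonneg) auto
  also have "\<dots> = it A t (Suc n) x" using s(1) by (simp add: hs_in hs_out)
  finally show ?case by blast
qed

lemma trace_pos_iff: "trace_rate E H CC g P Q > 0 \<longleftrightarrow>
   (\<exists>y\<in>DD. R (Pl P) (Pt y) > 0 \<and> hit_prob E H CC g AA (Pl Q) (Pt y) > 0)"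
proof
  assume "trace_rate E H CC g P Q > 0"
  then have "0 < (\<Sum>y\<in>DD. R (Pl P) (Pt y) * hit_prob E H CC g AA (Pl Q) (Pt y))"
    unfolding trace_rate_def .
  then obtain y where y: "y \<in> DD" "0 < R (Pl P) (Pt y) * hit_prob E H CC g AA (Pl Q) (Pt y)"
    using sum_pos_ex by blast
  then show "\<exists>y\<in>DD. R (Pl P) (Pt y) > 0 \<and> hit_prob E H CC g AA (Pl Q) (Pt y) > 0"
    using rate_nonneg[of "Pl P" "Pt y"] hit_prob_nonneg[of AA "Pl Q" "Pt y"]
    by (auto simp: zero_less_mult_iff)
next
  assume "\<exists>y\<in>DD. R (Pl P) (Pt y) > 0 \<and> hit_prob E H CC g AA (Pl Q) (Pt y) > 0"
  then obtain y where y: "y \<in> DD" "R (Pl P) (Pt y) > 0" "hit_prob E H CC g AA (Pl Q) (Pt y) > 0" by blast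
  have "0 < R (Pl P) (Pt y) * hit_prob E H CC g AA (Pl Q) (Pt y)" using y by simp
  also have "\<dots> \<le> (\<Sum>y\<in>DD. R (Pl P) (Pt y) * hit_prob E H CC g AA (Pl Q) (Pt y))"
    using y(1) by (intro member_le_sum mult_nonneg_nonneg rate_nonneg hit_prob_nonneg) simp_all
  finally show "trace_rate E H CC g P Q > 0" unfolding trace_rate_def .
qed

end


context lev begin

lemma Fmin_in_ST: "C \<in> CC \<Longrightarrow> Pl (Fmin H C) \<in> ST" by (simp add: states_def)
lemma Pt_in_ST: "x \<in> DD \<Longrightarrow> Pt x \<in> ST" by (simp add: states_def)

lemma bdry_star_H: "y \<in> bdry_star E H C \<Longrightarrow> H y = Min (H ` bdry E C)"
  unfolding bdry_star_def by (rule Fmin_H) simp_all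

lemma bdry_star_bdry: "y \<in> bdry_star E H C \<Longrightarrow> y \<in> bdry E C"
  unfolding bdry_star_def using Fmin_sub[of H "bdry E C"] by (rule subsetD)

lemma bdry_star_I: "y \<in> bdry E C \<Longrightarrow> H y = Min (H ` bdry E C) \<Longrightarrow> y \<in> bdry_star E H C"
  unfolding bdry_star_def by (rule Fmin_I) simp_all

lemma bdry_min_le: "y \<in> bdry E C \<Longrightarrow> Min (H ` bdry E C) \<le> H y"
  by (rule Min_le) auto

lemma lv_Pl: "C \<in> CC \<Longrightarrow> lv (Pl (Fmin H C)) = Min (H ` bdry E C)"
  by (simp add: lv_def cyc_eq)

lemma Pt_notAA [simp]: "Pt x \<notin> Pl ` X" by auto

lemma lv_Pt: "lv (Pt x) = H x" by (simp add: lv_def)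

lemma step_cases:
  assumes "stepR A u w"
  shows "(\<exists>x y. u = Pt x \<and> w = Pt y \<and> x \<in> DD \<and> y \<in> DD \<and> E x y \<and> H y \<le> H x)
       \<or> (\<exists>x C. u = Pt x \<and> w = Pl (Fmin H C) \<and> C \<in> CC \<and> x \<in> DD \<and> x \<in> bdry E C)
       \<or> (\<exists>C y. u = Pl (Fmin H C) \<and> w = Pt y \<and> C \<in> CC \<and> y \<in> DD \<and> depth E H C \<le> g
              \<and> y \<in> bdry_star E H C)"
proof -
  have r: "R u w > 0" using assms by (simp add: stepR_def)
  show ?thesis
  proof (cases u)
    case (Pt x) note u = this
    show ?thesis
    proof (cases w)
      case (Pt y) then show ?thesis using u r rate_PtPt by blast
    next
      case (Pl Q)
      then have "x \<in> DD \<and> (\<exists>C\<in>CC. Fmin H C = Q \<and> x \<in> bdry E C)" using rate_PtPl_pos r u by blast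
      then show ?thesis using u Pl by blast
    qed
  next
    case (Pl Q) note u = this
    show ?thesis
    proof (cases w)
      case (Pt y)
      then have "y \<in> DD \<and> (\<exists>C\<in>CC. Fmin H C = Q \<and> depth E H C \<le> g \<and> y \<in> bdry_star E H C)"
        using rate_PlPt_pos r u by blast
      then show ?thesis using u Pt by blast
    next
      case (Pl Q') then show ?thesis using u r by simp
    qed
  qed
qed

lemma lv_mono: "stepR A u w \<Longrightarrow> lv w \<le> lv u"
proof -
  assume "stepR A u w"
  from step_cases[OF this] show ?thesis
  proof (elim disjE exE conjE)
    fix x y assume "u = Pt x" "w = Pt y" "H y \<le> H x"
    then show ?thesis by (simp add: lv_Pt)
  next
    fix x C assume "u = Pt x" "w = Pl (Fmin H C)" "C \<in> CC" "x \<in> bdry E C"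
    then show ?thesis using bdry_min_le by (simp add: lv_Pt lv_Pl)
  next
    fix C y assume "u = Pl (Fmin H C)" "w = Pt y" "C \<in> CC" "y \<in> bdry_star E H C"
    then show ?thesis using bdry_star_H by (simp add: lv_Pt lv_Pl)
  qed
qed

lemma lv_mono_star: "(stepR A)\<^sup>*\<^sup>* u v \<Longrightarrow> lv v \<le> lv u"
proof (induction rule: rtranclp_induct)
  case base then show ?case by simp
next
  case (step y z) then show ?case using lv_mono[of A y z] by linarith
qed

lemma star_ST: "(stepR A)\<^sup>*\<^sup>* u v \<Longrightarrow> u \<in> ST \<Longrightarrow> v \<in> ST"
  by (induction rule: rtranclp_induct) (auto simp: stepR_def)

lemma notAA_depth: "C \<in> CC \<Longrightarrow> Pl (Fmin H C) \<notin> AA \<Longrightarrow> depth E H C < g"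
proof (rule ccontr)
  assume a: "C \<in> CC" "Pl (Fmin H C) \<notin> AA" "\<not> depth E H C < g"
  then have "C \<in> Cstar E H CC g" by (simp add: Cstar_def)
  then show False using a(2) by blast
qed

lemma rev_step:
  assumes st: "stepR AA u w" and w: "w \<notin> AA" and u: "u \<in> ST" and eq: "lv w = lv u"
  shows "stepR AA w u"
  using step_cases[OF st]
proof (elim disjE exE conjE)
  fix x y assume a: "u = Pt x" "w = Pt y" "x \<in> DD" "y \<in> DD" "E x y" "H y \<le> H x"
  have "E y x" using a(5) symE by (simp add: symp_def)
  moreover have "H x \<le> H y" using eq a by (simp add: lv_Pt)
  ultimately show ?thesis using a u by (auto simp: stepR_def)
next
  fix x C assume a: "u = Pt x" "w = Pl (Fmin H C)" "C \<in> CC" "x \<in> DD" "x \<in> bdry E C"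
  have "H x = Min (H ` bdry E C)" using eq a by (simp add: lv_Pt lv_Pl)
  then have xb: "x \<in> bdry_star E H C" using a(5) by (rule bdry_star_I[rotated])
  have "depth E H C < g" using notAA_depth a(3) w a(2) by blast
  then have "R (Pl (Fmin H C)) (Pt x) > 0" using rate_PlPt_posI[OF a(4) a(3) _ xb] by simp
  then show ?thesis using a u w by (simp add: stepR_def)
next
  fix C y assume a: "u = Pl (Fmin H C)" "w = Pt y" "C \<in> CC" "y \<in> DD" "depth E H C \<le> g"
    "y \<in> bdry_star E H C"
  have "R (Pt y) (Pl (Fmin H C)) > 0" using rate_PtPl_posI[OF a(4) a(3) bdry_star_bdry[OF a(6)]] .
  then show ?thesis using a u by (simp add: stepR_def)
qed

lemma L_eq:
  assumes path: "(stepR AA)\<^sup>*\<^sup>* u w" and u: "u \<in> ST" "lv u \<le> c"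
  shows "w \<notin> AA \<longrightarrow> c \<le> lv w \<longrightarrow> (stepR AA)\<^sup>*\<^sup>* w u \<and> lv w = c"
  using path
proof (induction rule: rtranclp_induct)
  case base then show ?case using u by auto
next
  case (step v w)
  show ?case
  proof (intro impI)
    assume w: "w \<notin> AA" and cw: "c \<le> lv w"
    have v: "v \<notin> AA" using step(2) by (simp add: stepR_def)
    have "lv w \<le> lv v" using lv_mono[OF step(2)] .
    then have cv: "c \<le> lv v" using cw by linarith
    then have IH: "(stepR AA)\<^sup>*\<^sup>* v u" "lv v = c" using step(3) v by auto
    have eq: "lv w = lv v" using IH(2) cw \<open>lv w \<le> lv v\<close> by linarith
    have "v \<in> ST" using star_ST[OF step(1) u(1)] .
    then have "stepR AA w v" using rev_step[OF step(2) w _ eq] by blast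
    then show "(stepR AA)\<^sup>*\<^sup>* w u \<and> lv w = c" using IH eq
      by (meson converse_rtranclp_into_rtranclp)
  qed
qed

lemma ground_edge:
  assumes CG: "CG \<in> CC" "depth E H CG \<ge> g" "Fmin H CG \<subseteq> ground H"
    and C': "C' \<in> CC" "depth E H C' \<ge> g"
    and tr: "trace_rate E H CC g (Fmin H CG) (Fmin H C') > 0"
  shows "Fmin H C' \<subseteq> ground H \<and> trace_rate E H CC g (Fmin H C') (Fmin H CG) > 0"
proof -
  have "Fmin H CG \<noteq> {}" using CG(1) CCne by (intro Fmin_ne) auto
  then obtain s where s: "s \<in> Fmin H CG" by blast
  then have sg: "\<forall>z. H s \<le> H z" using CG(3) by (auto simp: ground_def)
  have minCG: "Min (H ` CG) = H s" using Fmin_H[OF _ s] by simp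
  obtain y0 where y0: "y0 \<in> DD" "R (Pl (Fmin H CG)) (Pt y0) > 0"
    "hit_prob E H CC g AA (Pl (Fmin H C')) (Pt y0) > 0"
    using tr trace_pos_iff by blast
  obtain C where C: "C \<in> CC" "Fmin H C = Fmin H CG" "depth E H C \<le> g" "y0 \<in> bdry_star E H C"
    using rate_PlPt_pos[OF y0(2)] by blast
  have "C = CG" using cyc_unique C(1,2) CG(1) by blast
  then have dCG: "depth E H CG = g" and y0b: "y0 \<in> bdry_star E H CG" using C CG(2) by auto
  define c where "c = g + H s"
  have Hy0: "H y0 = c" using bdry_star_H[OF y0b] dCG minCG unfolding depth_def c_def by linarith
  obtain n where "it AA (Pl (Fmin H C')) n (Pt y0) > 0" using hit_prob_pos[OF y0(3)] by blast
  then have path: "(stepR AA)\<^sup>*\<^sup>* (Pt y0) (Pl (Fmin H C'))" using it_pos_path by blast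
  obtain v where v: "(stepR AA)\<^sup>*\<^sup>* (Pt y0) v" "stepR AA v (Pl (Fmin H C'))"
    using path by (cases rule: rtranclp.cases) auto
  obtain x C'' where x: "v = Pt x" "Fmin H C'' = Fmin H C'" "C'' \<in> CC" "x \<in> DD" "x \<in> bdry E C''"
    using step_cases[OF v(2)] by auto
  have "C'' = C'" using cyc_unique x(2,3) C'(1) by blast
  then have xb: "x \<in> bdry E C'" using x by simp
  have "C' \<noteq> {}" using C'(1) CCne by auto
  then have minC': "H s \<le> Min (H ` C')" using sg by simp
  have bC': "Min (H ` bdry E C') = depth E H C' + Min (H ` C')" unfolding depth_def by simp
  have "c \<le> lv v" using x(1) bdry_min_le[OF xb] bC' C'(2) minC' unfolding c_def by (simp add: lv_Pt)
  moreover have "lv (Pt y0) \<le> c" using Hy0 by (simp add: lv_Pt)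
  moreover have "v \<notin> AA" using x(1) by auto
  ultimately have bk: "(stepR AA)\<^sup>*\<^sup>* v (Pt y0)" and lvv: "lv v = c"
    using L_eq[OF v(1) Pt_in_ST[OF y0(1)]] by blast+
  have Hx: "H x = c" using lvv x(1) by (simp add: lv_Pt)
  have minC'eq: "Min (H ` C') = H s" and dC': "depth E H C' = g"
    using bdry_min_le[OF xb] bC' C'(2) minC' Hx unfolding c_def by linarith+
  have sub: "Fmin H C' \<subseteq> ground H"
  proof
    fix z assume "z \<in> Fmin H C'"
    then have "H z = H s" using Fmin_H[of C' z H] minC'eq by simp
    then show "z \<in> ground H" using sg by (simp add: ground_def)
  qed
  have xbs: "x \<in> bdry_star E H C'" using xb Hx bdry_min_le[OF xb] bC' dC' minC'eq unfolding c_def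
    by (intro bdry_star_I) auto
  have r1: "R (Pl (Fmin H C')) (Pt x) > 0" using rate_PlPt_posI[OF x(4) C'(1) _ xbs] dC' by simp
  have "stepR AA (Pt y0) (Pl (Fmin H CG))"
    using rate_PtPl_posI[OF y0(1) CG(1) bdry_star_bdry[OF y0b]] Fmin_in_ST[OF CG(1)]
    by (simp add: stepR_def)
  then have p2: "(stepR AA)\<^sup>*\<^sup>* (Pt x) (Pl (Fmin H CG))" using bk x(1) by simp
  have inA: "Pl (Fmin H CG) \<in> AA" using CG by (auto simp: Cstar_def)
  obtain m where "it AA (Pl (Fmin H CG)) m (Pt x) > 0" using path_it_pos[OF p2 inA] by blast
  then have "hit_prob E H CC g AA (Pl (Fmin H CG)) (Pt x) > 0"
    using hit_prob_ge[where n=m and A=AA and t="Pl (Fmin H CG)" and x="Pt x"] by linarith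
  then have "trace_rate E H CC g (Fmin H C') (Fmin H CG) > 0"
    using trace_pos_iff x(4) r1 by blast
  then show ?thesis using sub by blast
qed

end


context lev begin

abbreviation "PS \<equiv> Pstar E H CC g"
abbreviation "RCH \<equiv> reach E H CC g"
abbreviation "CLS \<equiv> closed_classes E H CC g"

lemma Pstar_cyc: "Q \<in> PS \<Longrightarrow> \<exists>C\<in>CC. depth E H C \<ge> g \<and> Q = Fmin H C"
  by (auto simp: Pstar_def Cstar_def)

lemma Pstar_I: "C \<in> CC \<Longrightarrow> depth E H C \<ge> g \<Longrightarrow> Fmin H C \<in> PS"
  by (auto simp: Pstar_def Cstar_def)

lemma Pstar_ne: "Q \<in> PS \<Longrightarrow> Q \<noteq> {}"
proof -
  assume "Q \<in> PS"
  then obtain C where C: "C \<in> CC" "Q = Fmin H C" using Pstar_cyc by blast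
  have "C \<noteq> {}" using CCne C(1) by blast
  then show ?thesis using Fmin_ne[of C H] C(2) by simp
qed

lemma Pstar_overlap: "Q1 \<in> PS \<Longrightarrow> Q2 \<in> PS \<Longrightarrow> p \<in> Q1 \<Longrightarrow> p \<in> Q2 \<Longrightarrow> Q1 = Q2"
proof -
  assume a: "Q1 \<in> PS" "Q2 \<in> PS" "p \<in> Q1" "p \<in> Q2"
  obtain C1 where C1: "C1 \<in> CC" "Q1 = Fmin H C1" using Pstar_cyc[OF a(1)] by blast
  obtain C2 where C2: "C2 \<in> CC" "Q2 = Fmin H C2" using Pstar_cyc[OF a(2)] by blast
  have "p \<in> C1" using a(3) C1(2) Fmin_sub[of H C1] by blast
  moreover have "p \<in> C2" using a(4) C2(2) Fmin_sub[of H C2] by blast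
  ultimately have "C1 = C2" using CCdisj C1(1) C2(1) by blast
  then show ?thesis using C1 C2 by simp
qed

lemma reach_trans: "RCH a b \<Longrightarrow> RCH b c \<Longrightarrow> RCH a c"
  unfolding reach_def by (rule rtranclp_trans)

lemma reach_refl: "RCH a a"
  unfolding reach_def by simp

lemma ground_reach:
  assumes G: "G \<in> PS" "G \<subseteq> ground H" and r: "RCH G Q"
  shows "Q \<subseteq> ground H \<and> RCH Q G"
  using r[unfolded reach_def]
proof (induction rule: rtranclp_induct)
  case base then show ?case using G reach_refl by simp
next
  case (step Q Q')
  have e: "Q \<in> PS" "Q' \<in> PS" "Q \<noteq> Q'" "trace_rate E H CC g Q Q' > 0" using step(2) by auto
  obtain CQ where CQ: "CQ \<in> CC" "depth E H CQ \<ge> g" "Q = Fmin H CQ" using Pstar_cyc[OF e(1)] by blast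
  obtain C' where C': "C' \<in> CC" "depth E H C' \<ge> g" "Q' = Fmin H C'" using Pstar_cyc[OF e(2)] by blast
  have gq: "Fmin H CQ \<subseteq> ground H" using step(3) CQ(3) by simp
  have "Q' \<subseteq> ground H \<and> trace_rate E H CC g Q' Q > 0"
    using ground_edge[OF CQ(1,2) gq C'(1,2)] e(4) CQ(3) C'(3) by simp
  then have "Q' \<subseteq> ground H" "RCH Q' Q" using e unfolding reach_def by auto
  then show ?case using step(3) reach_trans by blast
qed

definition cls :: "'a set \<Rightarrow> 'a set set" where
  "cls P = {Q \<in> PS. RCH P Q \<and> RCH Q P}"

lemma cls_mem: "P \<in> PS \<Longrightarrow> P \<in> cls P"
  unfolding cls_def using reach_refl by simp

lemma ground_cls: assumes "G \<in> PS" "G \<subseteq> ground H" shows "cls G \<in> CLS"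
proof -
  have "\<forall>Q. RCH G Q \<longrightarrow> RCH Q G" using ground_reach[OF assms] by blast
  then have "cls G = {Q \<in> PS. RCH G Q \<and> RCH Q G} \<and> G \<in> PS \<and> (\<forall>Q. RCH G Q \<longrightarrow> RCH Q G)"
    using assms(1) by (simp add: cls_def)
  then show ?thesis unfolding closed_classes_def by (intro CollectI exI[of _ G])
qed

lemma ground_cls_sub: "G \<in> PS \<Longrightarrow> G \<subseteq> ground H \<Longrightarrow> Q \<in> cls G \<Longrightarrow> Q \<subseteq> ground H"
proof -
  assume a: "G \<in> PS" "G \<subseteq> ground H" "Q \<in> cls G"
  then have "RCH G Q" by (simp add: cls_def)
  then show ?thesis using ground_reach[OF a(1,2)] by blast
qed

lemma CLS_gen: "K \<in> CLS \<Longrightarrow> \<exists>P\<in>PS. K = cls P"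
  unfolding closed_classes_def cls_def by auto

lemma CLS_sub: "K \<in> CLS \<Longrightarrow> K \<subseteq> PS"
  unfolding closed_classes_def by auto

lemma cls_eq: "Q \<in> cls P1 \<Longrightarrow> Q \<in> cls P2 \<Longrightarrow> cls P1 = cls P2"
proof -
  assume a: "Q \<in> cls P1" "Q \<in> cls P2"
  then have r: "RCH P1 Q" "RCH Q P1" "RCH P2 Q" "RCH Q P2" by (auto simp: cls_def)
  have "RCH P1 P2" "RCH P2 P1" using r reach_trans by blast+
  then have "\<And>Z. (RCH P1 Z \<and> RCH Z P1) = (RCH P2 Z \<and> RCH Z P2)" using reach_trans by blast
  then show ?thesis unfolding cls_def by simp
qed

lemma CLS_eq: "K1 \<in> CLS \<Longrightarrow> K2 \<in> CLS \<Longrightarrow> Q \<in> K1 \<Longrightarrow> Q \<in> K2 \<Longrightarrow> K1 = K2"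
proof -
  assume a: "K1 \<in> CLS" "K2 \<in> CLS" "Q \<in> K1" "Q \<in> K2"
  obtain P1 where "K1 = cls P1" using CLS_gen a(1) by blast
  moreover obtain P2 where "K2 = cls P2" using CLS_gen a(2) by blast
  ultimately show ?thesis using cls_eq a(3,4) by simp
qed

lemma CLS_ne: "K \<in> CLS \<Longrightarrow> \<Union>K \<noteq> {}"
proof -
  assume "K \<in> CLS"
  then obtain P where P: "P \<in> PS" "K = cls P" using CLS_gen by blast
  then have "P \<in> K" using cls_mem by simp
  moreover have "P \<noteq> {}" using Pstar_ne P(1) .
  ultimately show ?thesis by blast
qed

lemma CLS_inj: "inj_on Union CLS"
proof (rule inj_onI)
  fix K1 K2 assume k: "K1 \<in> CLS" "K2 \<in> CLS" "\<Union>K1 = \<Union>K2"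
  obtain P where P: "P \<in> PS" "K1 = cls P" using CLS_gen k(1) by blast
  have PK: "P \<in> K1" using cls_mem P by simp
  obtain p where p: "p \<in> P" using Pstar_ne P(1) by blast
  then have "p \<in> \<Union>K2" using PK k(3) by blast
  then obtain Q where Q: "Q \<in> K2" "p \<in> Q" by blast
  have "Q \<in> PS" using CLS_sub k(2) Q(1) by blast
  then have "Q = P" using Pstar_overlap P(1) p Q(2) by blast
  then show "K1 = K2" using CLS_eq k(1,2) PK Q(1) by simp
qed

end



locale inv = gr E H for E :: "'a::finite \<Rightarrow> 'a \<Rightarrow> bool" and H +
  fixes Ps prev :: "'a set set"
  assumes Pne: "\<forall>P\<in>Ps. P \<noteq> {}" and card2: "2 \<le> card Ps"
    and prevne: "\<forall>C\<in>prev. C \<noteq> {}"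
    and prevdisj: "\<forall>C1\<in>prev. \<forall>C2\<in>prev. C1 \<noteq> C2 \<longrightarrow> C1 \<inter> C2 = {}"
    and gsub: "ground H \<subseteq> \<Union>Ps"
    and sep: "\<forall>P\<in>Ps. \<forall>Q\<in>Ps. P \<noteq> Q \<longrightarrow> (\<forall>p\<in>P. \<forall>q\<in>Q. Hmin H P < Phi E H p q)"
begin

abbreviation "V \<equiv> Vset E H Ps"
abbreviation "Gm \<equiv> Gam E H Ps"
abbreviation "gg \<equiv> Gstar E H Ps"
abbreviation "CCL \<equiv> level_cycles E H (Ps, prev)"

lemma CCL_eq: "CCL = V ` Ps \<union> {C \<in> prev. \<forall>P\<in>Ps. C \<inter> V P = {}}"
  by (simp add: level_cycles_def Let_def)

lemma other: "P \<in> Ps \<Longrightarrow> \<exists>Q\<in>Ps. Q \<noteq> P"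
proof (rule ccontr)
  assume a: "P \<in> Ps" "\<not> (\<exists>Q\<in>Ps. Q \<noteq> P)"
  then have "Ps \<subseteq> {P}" by blast
  then have "card Ps \<le> 1" using card_mono[of "{P}" Ps] by simp
  then show False using card2 by simp
qed

lemma Hmin_le: "p \<in> P \<Longrightarrow> Hmin H P \<le> H p"
  unfolding Hmin_def by (rule Min_le) auto

lemma Hmin_in: "P \<noteq> {} \<Longrightarrow> \<exists>p\<in>P. H p = Hmin H P"
proof -
  assume "P \<noteq> {}"
  then have "Min (H ` P) \<in> H ` P" by (intro Min_in) auto
  then show ?thesis unfolding Hmin_def by auto
qed

lemma others_ne: "P \<in> Ps \<Longrightarrow> \<Union>(Ps - {P}) \<noteq> {}"
proof -
  assume "P \<in> Ps"
  then obtain Q where "Q \<in> Ps" "Q \<noteq> P" using other by blast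
  moreover then have "Q \<noteq> {}" using Pne by blast
  ultimately show ?thesis by blast
qed

lemma Gam_level: "Hmin H P + Gm P = PhiS E H P (\<Union>(Ps - {P}))"
  by (simp add: Gam_def)

lemma Gam_pos: "P \<in> Ps \<Longrightarrow> 0 < Gm P"
proof -
  assume P: "P \<in> Ps"
  have "P \<noteq> {}" using Pne P by blast
  then obtain p q where pq: "p \<in> P" "q \<in> \<Union>(Ps - {P})" "PhiS E H P (\<Union>(Ps - {P})) = Phi E H p q"
    using PhiS_obtain[of P "\<Union>(Ps - {P})"] others_ne[OF P] by blast
  then obtain Q where Q: "Q \<in> Ps" "Q \<noteq> P" "q \<in> Q" by blast
  have "Hmin H P < Phi E H p q" using sep P Q pq(1) by metis
  then show ?thesis using pq(3) Gam_level[of P] by linarith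
qed

lemma Ps_fin: "finite Ps" by simp

lemma Ps_ne: "Ps \<noteq> {}" using card2 by auto

lemma gg_pos: "0 < gg"
  unfolding Gstar_def using Gam_pos Ps_ne by (subst Min_gr_iff) auto

lemma gg_le: "P \<in> Ps \<Longrightarrow> gg \<le> Gm P"
  unfolding Gstar_def by (rule Min_le) auto

lemma V_mem: "x \<in> V P \<longleftrightarrow> PhiS E H P {x} - Hmin H P < Gm P"
  by (simp add: Vset_def)

lemma PhiS_single: "P \<noteq> {} \<Longrightarrow> \<exists>p\<in>P. PhiS E H P {x} = Phi E H p x"
  using PhiS_obtain[of P "{x}"] by auto

lemma V_argmin: "P \<in> Ps \<Longrightarrow> p \<in> P \<Longrightarrow> H p = Hmin H P \<Longrightarrow> p \<in> V P"
proof -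
  assume a: "P \<in> Ps" "p \<in> P" "H p = Hmin H P"
  have "PhiS E H P {p} \<le> Phi E H p p" using a(2) by (intro PhiS_le) auto
  then have "PhiS E H P {p} \<le> Hmin H P" using Phi_refl a(3) by simp
  then show ?thesis using Gam_pos[OF a(1)] V_mem by simp
qed

lemma V_ne: "P \<in> Ps \<Longrightarrow> V P \<noteq> {}"
proof -
  assume P: "P \<in> Ps"
  then have "P \<noteq> {}" using Pne by blast
  then obtain p where "p \<in> P" "H p = Hmin H P" using Hmin_in by blast
  then have "p \<in> V P" using V_argmin[OF P] by blast
  then show ?thesis by blast
qed

lemma notV_other: "P \<in> Ps \<Longrightarrow> Q \<in> Ps \<Longrightarrow> Q \<noteq> P \<Longrightarrow> q \<in> Q \<Longrightarrow> q \<notin> V P"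
proof -
  assume a: "P \<in> Ps" "Q \<in> Ps" "Q \<noteq> P" "q \<in> Q"
  have "P \<noteq> {}" using Pne a(1) by blast
  then obtain p where p: "p \<in> P" "PhiS E H P {q} = Phi E H p q" using PhiS_single by blast
  have "q \<in> \<Union>(Ps - {P})" using a by blast
  then have "PhiS E H P (\<Union>(Ps - {P})) \<le> Phi E H p q" using p(1) by (intro PhiS_le)
  then show ?thesis using p(2) Gam_level[of P] V_mem by simp
qed

lemma V_disj: "P \<in> Ps \<Longrightarrow> Q \<in> Ps \<Longrightarrow> P \<noteq> Q \<Longrightarrow> V P \<inter> V Q = {}"
proof (rule ccontr)
  assume a: "P \<in> Ps" "Q \<in> Ps" "P \<noteq> Q" "V P \<inter> V Q \<noteq> {}"
  then obtain x where x: "x \<in> V P" "x \<in> V Q" by blast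
  have "P \<noteq> {}" "Q \<noteq> {}" using Pne a by blast+
  then obtain p q where p: "p \<in> P" "PhiS E H P {x} = Phi E H p x"
    and q: "q \<in> Q" "PhiS E H Q {x} = Phi E H q x" using PhiS_single by metis
  have "q \<in> \<Union>(Ps - {P})" using a q by blast
  then have l1: "PhiS E H P (\<Union>(Ps - {P})) \<le> Phi E H p q" using p(1) by (intro PhiS_le)
  have "p \<in> \<Union>(Ps - {Q})" using a p by blast
  then have l2: "PhiS E H Q (\<Union>(Ps - {Q})) \<le> Phi E H q p" using q(1) by (intro PhiS_le)
  have b1: "Phi E H p x < Phi E H p q" using x(1) V_mem p(2) Gam_level[of P] l1 by simp
  have b2: "Phi E H q x < Phi E H p q" using x(2) V_mem q(2) Gam_level[of Q] l2 Phi_sym[of q p] by simp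
  have "Phi E H p q \<le> max (Phi E H p x) (Phi E H x q)" by (rule Phi_trans)
  then show False using b1 b2 Phi_sym[of x q] by linarith
qed

lemma V_bdry:
  assumes P: "P \<in> Ps"
  shows "bdry E (V P) \<noteq> {}" "Hmin H P + Gm P \<le> Min (H ` bdry E (V P))"
proof -
  have Pn: "P \<noteq> {}" using Pne P by blast
  obtain p where p: "p \<in> P" "H p = Hmin H P" using Hmin_in Pn by blast
  have pV: "p \<in> V P" using V_argmin P p by blast
  obtain Q where Q: "Q \<in> Ps" "Q \<noteq> P" using other P by blast
  then obtain q where q: "q \<in> Q" using Pne by blast
  have "q \<notin> V P" using notV_other P Q q by blast
  then show ne: "bdry E (V P) \<noteq> {}" using Phi_exit(1) pV by blast
  have "Hmin H P + Gm P \<le> H x" if x: "x \<in> bdry E (V P)" for x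
  proof -
    obtain y where y: "y \<in> V P" "E x y" and xn: "x \<notin> V P" using x by (auto simp: bdry_def)
    obtain p' where p': "p' \<in> P" "PhiS E H P {y} = Phi E H p' y" using PhiS_single Pn by blast
    have "E y x" using y(2) symE by (simp add: symp_def)
    then have "Phi E H p' x \<le> max (Phi E H p' y) (H x)" by (rule Phi_edge)
    moreover have "PhiS E H P {x} \<le> Phi E H p' x" using p'(1) by (intro PhiS_le) auto
    moreover have "\<not> (PhiS E H P {x} - Hmin H P < Gm P)" using xn V_mem by simp
    moreover have "Phi E H p' y - Hmin H P < Gm P" using y(1) V_mem p'(2) by simp
    ultimately show ?thesis by linarith
  qed
  then show "Hmin H P + Gm P \<le> Min (H ` bdry E (V P))" using ne by (subst Min_ge_iff) auto
qed

lemma ground_V: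
  assumes s: "s \<in> ground H" and P: "P \<in> Ps" "s \<in> P"
  shows "s \<in> V P" "Min (H ` V P) = H s" "gg \<le> depth E H (V P)"
proof -
  have sg: "\<forall>z. H s \<le> H z" using s by (simp add: ground_def)
  have Pn: "P \<noteq> {}" using Pne P by blast
  obtain p where p: "p \<in> P" "H p = Hmin H P" using Hmin_in Pn by blast
  have hs: "H s = Hmin H P" using Hmin_le[OF P(2)] sg p(2) by (metis order_antisym)
  show sV: "s \<in> V P" using V_argmin P hs by blast
  show mV: "Min (H ` V P) = H s" using sV sg by (intro Min_eqI) auto
  have "Hmin H P + Gm P \<le> Min (H ` bdry E (V P))" using V_bdry(2)[OF P(1)] .
  then show "gg \<le> depth E H (V P)" unfolding depth_def using mV hs gg_le[OF P(1)] by linarith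
qed

lemma CC_ne: "\<forall>C\<in>CCL. C \<noteq> {}"
proof
  fix C assume "C \<in> CCL"
  then have "C \<in> V ` Ps \<or> C \<in> prev" unfolding CCL_eq by blast
  then show "C \<noteq> {}" using V_ne prevne by blast
qed

lemma CC_disj: "\<forall>C1\<in>CCL. \<forall>C2\<in>CCL. C1 \<noteq> C2 \<longrightarrow> C1 \<inter> C2 = {}"
proof (intro ballI impI)
  fix C1 C2 assume c: "C1 \<in> CCL" "C2 \<in> CCL" "C1 \<noteq> C2"
  show "C1 \<inter> C2 = {}"
  proof (cases "C1 \<in> V ` Ps")
    case True
    then obtain P where P: "P \<in> Ps" "C1 = V P" by blast
    show ?thesis
    proof (cases "C2 \<in> V ` Ps")
      case True
      then obtain Q where Q: "Q \<in> Ps" "C2 = V Q" by blast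
      then have "P \<noteq> Q" using P c(3) by blast
      then show ?thesis using V_disj P Q by simp
    next
      case False
      then have "C2 \<inter> V P = {}" using c(2) P(1) unfolding CCL_eq by blast
      then show ?thesis using P by blast
    qed
  next
    case False
    then have c1: "C1 \<in> prev" "\<forall>P\<in>Ps. C1 \<inter> V P = {}" using c(1) unfolding CCL_eq by blast+
    show ?thesis
    proof (cases "C2 \<in> V ` Ps")
      case True
      then obtain Q where Q: "Q \<in> Ps" "C2 = V Q" by blast
      then show ?thesis using c1 by blast
    next
      case False
      then have "C2 \<in> prev" using c(2) unfolding CCL_eq by blast
      then show ?thesis using c1 prevdisj c(3) by blast
    qed
  qed
qed

end

sublocale inv \<subseteq> lev E H CCL gg
  by unfold_locales (rule CC_ne, rule CC_disj)

context inv begin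

lemma ground_G: "s \<in> ground H \<Longrightarrow> \<exists>G\<in>PS. s \<in> G \<and> G \<subseteq> ground H"
proof -
  assume s: "s \<in> ground H"
  then obtain P where P: "P \<in> Ps" "s \<in> P" using gsub by blast
  note gv = ground_V[OF s P]
  have C: "V P \<in> CCL" using P(1) unfolding CCL_eq by blast
  have G: "Fmin H (V P) \<in> PS" using Pstar_I[OF C gv(3)] .
  have sG: "s \<in> Fmin H (V P)" using gv(1,2) by (intro Fmin_I) auto
  have "Fmin H (V P) \<subseteq> ground H"
  proof
    fix z assume "z \<in> Fmin H (V P)"
    then have "H z = H s" using Fmin_H[of "V P" z H] gv(2) by simp
    then show "z \<in> ground H" using s by (simp add: ground_def)
  qed
  then show ?thesis using G sG by blast
qed

lemma final:
  assumes c1: "card CLS = 1"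
  shows "\<forall>K\<in>CLS. \<Union>K = ground H"
proof
  fix K assume K: "K \<in> CLS"
  obtain K0 where K0: "CLS = {K0}" using c1 by (rule card_1_singletonE)
  have one: "\<And>K'. K' \<in> CLS \<Longrightarrow> K' = K" using K0 K by blast
  show "\<Union>K = ground H"
  proof
    show "ground H \<subseteq> \<Union>K"
    proof
      fix s assume s: "s \<in> ground H"
      obtain G where G: "G \<in> PS" "s \<in> G" "G \<subseteq> ground H" using ground_G[OF s] by blast
      have "cls G = K" using one ground_cls[OF G(1,3)] by blast
      then show "s \<in> \<Union>K" using cls_mem[OF G(1)] G(2) by blast
    qed
  next
    show "\<Union>K \<subseteq> ground H"
    proof
      fix x assume "x \<in> \<Union>K"
      then obtain Q where Q: "Q \<in> K" "x \<in> Q" by blast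
      have "Min (range H) \<in> range H" by (rule Min_in) auto
      then obtain s where s: "Min (range H) = H s" by (rule rangeE)
      have "Min (range H) \<le> H y" for y by (rule Min_le) auto
      then have "H s \<le> H y" for y using s by simp
      then have "s \<in> ground H" by (auto simp: ground_def)
      then obtain G where G: "G \<in> PS" "s \<in> G" "G \<subseteq> ground H" using ground_G by blast
      have "cls G = K" using one ground_cls[OF G(1,3)] by blast
      then show "x \<in> ground H" using ground_cls_sub[OF G(1,3)] Q by blast
    qed
  qed
qed

end


context inv begin

lemma next_eq: "next_level E H (Ps, prev) = (Union ` CLS,
   {C \<in> Cstar E H CCL gg. Fmin H C \<in> transient E H CCL gg} \<union> Csharp E H CCL gg)"
  by (simp add: next_level_def Let_def)

lemma preserve:
  assumes c2: "2 \<le> card CLS"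
  shows "inv E H (fst (next_level E H (Ps, prev))) (snd (next_level E H (Ps, prev)))"
proof -
  define Ps' where "Ps' = Union ` CLS"
  define pr where "pr = {C \<in> Cstar E H CCL gg. Fmin H C \<in> transient E H CCL gg} \<union> Csharp E H CCL gg"
  have prsub: "pr \<subseteq> CCL" unfolding pr_def by (auto simp: Cstar_def Csharp_def)
  have "inv E H Ps' pr"
  proof (intro inv.intro inv_axioms.intro)
    show "gr E" by (rule gr.intro[OF symE conn])
    show "\<forall>P\<in>Ps'. P \<noteq> {}" unfolding Ps'_def using CLS_ne by blast
    show "2 \<le> card Ps'" unfolding Ps'_def using card_image[OF CLS_inj] c2 by simp
    show "\<forall>C\<in>pr. C \<noteq> {}" using prsub CC_ne by blast
    show "\<forall>C1\<in>pr. \<forall>C2\<in>pr. C1 \<noteq> C2 \<longrightarrow> C1 \<inter> C2 = {}" using prsub CC_disj by blast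
    show "ground H \<subseteq> \<Union>Ps'"
    proof
      fix s assume s: "s \<in> ground H"
      obtain G where G: "G \<in> PS" "s \<in> G" "G \<subseteq> ground H" using ground_G[OF s] by blast
      have "cls G \<in> CLS" using ground_cls[OF G(1,3)] .
      moreover have "s \<in> \<Union>(cls G)" using cls_mem[OF G(1)] G(2) by blast
      ultimately show "s \<in> \<Union>Ps'" unfolding Ps'_def by blast
    qed
    show "\<forall>P\<in>Ps'. \<forall>Q\<in>Ps'. P \<noteq> Q \<longrightarrow> (\<forall>p\<in>P. \<forall>q\<in>Q. Hmin H P < Phi E H p q)"
    proof (intro ballI impI)
      fix P' Q' p q assume a: "P' \<in> Ps'" "Q' \<in> Ps'" "P' \<noteq> Q'" "p \<in> P'" "q \<in> Q'"
      obtain K1 where K1: "K1 \<in> CLS" "P' = \<Union>K1" using a(1) unfolding Ps'_def by blast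
      obtain K2 where K2: "K2 \<in> CLS" "Q' = \<Union>K2" using a(2) unfolding Ps'_def by blast
      obtain Q1 where Q1: "Q1 \<in> K1" "p \<in> Q1" using a(4) K1(2) by blast
      obtain Q2 where Q2: "Q2 \<in> K2" "q \<in> Q2" using a(5) K2(2) by blast
      have "Q1 \<in> PS" using CLS_sub K1(1) Q1(1) by blast
      then obtain C1 where C1: "C1 \<in> CCL" "depth E H C1 \<ge> gg" "Q1 = Fmin H C1" using Pstar_cyc by blast
      have "Q2 \<in> PS" using CLS_sub K2(1) Q2(1) by blast
      then obtain C2 where C2: "C2 \<in> CCL" "Q2 = Fmin H C2" using Pstar_cyc by blast
      have "K1 \<noteq> K2" using a(3) K1 K2 by blast
      then have "Q1 \<noteq> Q2" using CLS_eq K1(1) K2(1) Q1(1) Q2(1) by blast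
      then have "C1 \<noteq> C2" using C1(3) C2(2) by blast
      have pC1: "p \<in> C1" using Q1(2) C1(3) Fmin_sub[of H C1] by blast
      have qC2: "q \<in> C2" using Q2(2) C2(2) Fmin_sub[of H C2] by blast
      have "q \<notin> C1" using CC_disj C1(1) C2(1) \<open>C1 \<noteq> C2\<close> qC2 by blast
      then have ex: "Min (H ` bdry E C1) \<le> Phi E H p q" using Phi_exit(2) pC1 by blast
      have hp: "H p = Min (H ` C1)" using Fmin_H[of C1 p H] Q1(2) C1(3) by simp
      have "Hmin H P' \<le> H p" using Hmin_le a(4) by blast
      then show "Hmin H P' < Phi E H p q" using ex hp C1(2) gg_pos unfolding depth_def by linarith
    qed
  qed
  then show ?thesis using next_eq unfolding Ps'_def pr_def by simp
qed

end

context gr begin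

lemma path_prefix: "is_path E w x y \<Longrightarrow> z \<in> set w \<Longrightarrow> \<exists>w'. is_path E w' x z \<and> set w' \<subseteq> set w"
proof (induction w arbitrary: x)
  case Nil then show ?case by (simp add: is_path_def)
next
  case (Cons a r)
  have ax: "a = x" using Cons.prems(1) by (simp add: is_path_def)
  show ?case
  proof (cases "z = a")
    case True
    then have "is_path E [a] x z" using ax by (simp add: is_path_def)
    then show ?thesis by auto
  next
    case False
    then have zr: "z \<in> set r" using Cons.prems(2) by simp
    then obtain b r' where r: "r = b # r'" by (cases r) auto
    have pr: "is_path E r b y" using Cons.prems(1) r by (auto simp: is_path_def)
    have eab: "E a b" using Cons.prems(1) r by (auto simp: is_path_def)
    obtain w'' where w'': "is_path E w'' b z" "set w'' \<subseteq> set r" using Cons.IH[OF pr zr] by blast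
    have "w'' \<noteq> []" "hd w'' = b" using w''(1) by (auto simp: is_path_def)
    then have "is_path E (a # w'') x z" using w''(1) eab ax
      by (auto simp: is_path_def successively_Cons)
    moreover have "set (a # w'') \<subseteq> set (a # r)" using w''(2) by auto
    ultimately show ?thesis by blast
  qed
qed

lemma plateau_ground:
  assumes s: "s \<in> ground H"
  shows "{x. Phi E H s x \<le> H s} \<in> plateaux1 E H" "s \<in> {x. Phi E H s x \<le> H s}"
proof -
  define P where "P = {x. Phi E H s x \<le> H s}"
  have sg: "\<forall>z. H s \<le> H z" using s by (simp add: ground_def)
  have sP: "s \<in> P" unfolding P_def using Phi_refl by simp
  have HP: "\<And>x. x \<in> P \<Longrightarrow> H x = H s"
  proof -
    fix x assume "x \<in> P"
    then have "Phi E H s x \<le> H s" by (simp add: P_def)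
    then show "H x = H s" using Phi_ge2[of x s] sg by (metis order_antisym order_trans)
  qed
  have conn_P: "connected_set E P"
    unfolding connected_set_def
  proof (intro ballI)
    fix x y assume xy: "x \<in> P" "y \<in> P"
    obtain w where w: "is_path E w x y" "Phi E H x y = path_height H w" using Phi_obtain by blast
    have "Phi E H x y \<le> max (Phi E H x s) (Phi E H s y)" by (rule Phi_trans)
    then have hw: "path_height H w \<le> H s" using xy w(2) Phi_sym[of x s] by (simp add: P_def)
    have "set w \<subseteq> P"
    proof
      fix z assume z: "z \<in> set w"
      obtain w' where w': "is_path E w' x z" "set w' \<subseteq> set w" using path_prefix[OF w(1) z] by blast
      have "w' \<noteq> []" using w'(1) by (simp add: is_path_def)
      have "path_height H w' \<in> H ` set w'" using height_mem[OF \<open>w' \<noteq> []\<close>] .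
      then obtain z' where z': "z' \<in> set w'" "path_height H w' = H z'" by (rule imageE) simp
      have "H z' \<le> path_height H w" using z' w'(2) height_ge by blast
      then have "Phi E H x z \<le> H s" using Phi_le[OF w'(1)] z'(2) hw by linarith
      moreover have "Phi E H s z \<le> max (Phi E H s x) (Phi E H x z)" by (rule Phi_trans)
      ultimately show "z \<in> P" using xy(1) by (simp add: P_def)
    qed
    then show "\<exists>w. is_path E w x y \<and> set w \<subseteq> P" using w(1) by blast
  qed
  have bd: "\<forall>x\<in>P. \<forall>y\<in>bdry E P. H x < H y"
  proof (intro ballI)
    fix x y assume x: "x \<in> P" and y: "y \<in> bdry E P"
    obtain z where z: "z \<in> P" "E y z" and yn: "y \<notin> P" using y by (auto simp: bdry_def)
    have "E z y" using z(2) symE by (simp add: symp_def)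
    then have "Phi E H s y \<le> max (Phi E H s z) (H y)" by (rule Phi_edge)
    then have "\<not> H y \<le> H s" using yn z(1) by (auto simp: P_def)
    then show "H x < H y" using HP[OF x] by simp
  qed
  have c3: "\<forall>x\<in>P. \<forall>y\<in>P. H x = H y" using HP by simp
  have pne: "P \<noteq> {}" using sP by blast
  have stab: "stable_plateau E H P"
    unfolding stable_plateau_def using pne conn_P c3 bd by (intro conjI)
  have fin: "finite {Phi E H a b | a b. a \<in> ground H \<and> b \<in> ground H}"
  proof -
    have "{Phi E H a b | a b. a \<in> ground H \<and> b \<in> ground H} \<subseteq> range (\<lambda>(a, b). Phi E H a b)" by auto
    then show ?thesis by (rule finite_subset) simp
  qed
  have "Phi E H s s \<in> {Phi E H a b | a b. a \<in> ground H \<and> b \<in> ground H}" using s by blast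
  then have "Phi E H s s \<le> Phibar E H" unfolding Phibar_def by (rule Max_ge[OF fin])
  then have pb: "H s \<le> Phibar E H" using Phi_refl[of s] by simp
  have "P \<subseteq> Omegabar E H"
  proof
    fix x assume x: "x \<in> P"
    have "PhiS E H (ground H) {x} \<le> Phi E H s x" using s by (intro PhiS_le) auto
    then show "x \<in> Omegabar E H" using x pb by (simp add: Omegabar_def P_def)
  qed
  then show "{x. Phi E H s x \<le> H s} \<in> plateaux1 E H" using stab unfolding plateaux1_def P_def by simp
  show "s \<in> {x. Phi E H s x \<le> H s}" using sP unfolding P_def .
qed

lemma plateau_sub:
  assumes P: "stable_plateau E H P" and Q: "stable_plateau E H Q" and x: "x \<in> P" "x \<in> Q"
  shows "P \<subseteq> Q"
proof
  fix y assume y: "y \<in> P"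
  obtain w where w: "is_path E w x y" "set w \<subseteq> P" using P x(1) y unfolding stable_plateau_def connected_set_def by blast
  show "y \<in> Q"
  proof (rule ccontr)
    assume "y \<notin> Q"
    then obtain z where z: "z \<in> set w" "z \<in> bdry E Q" using path_exit[OF w(1) x(2)] by blast
    have "H z = H x" using P z(1) w(2) x(1) unfolding stable_plateau_def by blast
    moreover have "H x < H z" using Q x(2) z(2) unfolding stable_plateau_def by blast
    ultimately show False by simp
  qed
qed

lemma base:
  assumes c: "2 \<le> card (plateaux1 E H)"
  shows "inv E H (plateaux1 E H) {}"
proof (intro inv.intro inv_axioms.intro)
  show "gr E" by (rule gr.intro[OF symE conn])
  show "\<forall>P\<in>plateaux1 E H. P \<noteq> {}" by (simp add: plateaux1_def stable_plateau_def)
  show "2 \<le> card (plateaux1 E H)" using c .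
  show "\<forall>C\<in>{}. C \<noteq> {}" by simp
  show "\<forall>C1\<in>{}. \<forall>C2\<in>{}. C1 \<noteq> C2 \<longrightarrow> C1 \<inter> C2 = {}" by simp
  show "ground H \<subseteq> \<Union>(plateaux1 E H)" using plateau_ground by blast
  show "\<forall>P\<in>plateaux1 E H. \<forall>Q\<in>plateaux1 E H. P \<noteq> Q \<longrightarrow> (\<forall>p\<in>P. \<forall>q\<in>Q. Hmin H P < Phi E H p q)"
  proof (intro ballI impI)
    fix P Q p q assume a: "P \<in> plateaux1 E H" "Q \<in> plateaux1 E H" "P \<noteq> Q" "p \<in> P" "q \<in> Q"
    have sP: "stable_plateau E H P" and sQ: "stable_plateau E H Q" using a(1,2) by (auto simp: plateaux1_def)
    have "q \<notin> P"
    proof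
      assume "q \<in> P"
      then have "P \<subseteq> Q" "Q \<subseteq> P" using plateau_sub sP sQ a(5) by blast+
      then show False using a(3) by blast
    qed
    then have ne: "bdry E P \<noteq> {}" and ex: "Min (H ` bdry E P) \<le> Phi E H p q" using Phi_exit a(4) by blast+
    have "\<forall>y\<in>bdry E P. H p < H y" using sP a(4) unfolding stable_plateau_def by blast
    then have "H p < Min (H ` bdry E P)" using ne by (subst Min_gr_iff) auto
    moreover have "Hmin H P \<le> H p" unfolding Hmin_def using a(4) by (intro Min_le) auto
    ultimately show "Hmin H P < Phi E H p q" using ex by linarith
  qed
qed

end

theorem mainTheorem8:
  fixes E :: "'a::finite \<Rightarrow> 'a \<Rightarrow> bool" and H :: "'a \<Rightarrow> real" and m :: nat
  assumes "symp E" and "irreflp E" and "\<forall>x y. E\<^sup>*\<^sup>* x y"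
    and "card (plateaux1 E H) \<ge> 2"
    and "m \<ge> 1" and "nu E H m = 1"
    and "\<forall>h. 1 \<le> h \<and> h < m \<longrightarrow> nu E H h \<ge> 2"
  shows "\<forall>K \<in> level_classes E H (level E H m). \<Union>K = ground H"
proof -
  interpret gr E H by (rule gr.intro[OF assms(1) assms(3)])
  have lv: "k < m \<longrightarrow> inv E H (fst (level E H (Suc k))) (snd (level E H (Suc k)))" for k
  proof (induction k)
    case 0
    have "level E H (Suc 0) = (plateaux1 E H, {})" by (simp add: level_def)
    then show ?case using base[OF assms(4)] by simp
  next
    case (Suc k)
    show ?case
    proof
      assume k: "Suc k < m"
      define L where "L = level E H (Suc k)"
      have iL: "inv E H (fst L) (snd L)" using Suc k unfolding L_def by simp
      have "nu E H (Suc k) \<ge> 2" using assms(7) k by simp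
      then have "2 \<le> card (closed_classes E H (level_cycles E H (fst L, snd L)) (Gstar E H (fst L)))"
        unfolding nu_def level_classes_def L_def by simp
      then have "inv E H (fst (next_level E H (fst L, snd L))) (snd (next_level E H (fst L, snd L)))"
        using inv.preserve[OF iL] by blast
      moreover have "level E H (Suc (Suc k)) = next_level E H L" unfolding L_def by (simp add: level_def)
      ultimately show "inv E H (fst (level E H (Suc (Suc k)))) (snd (level E H (Suc (Suc k))))" by simp
    qed
  qed
  obtain k where mk: "m = Suc k" using assms(5) by (cases m) auto
  define L where "L = level E H m"
  have iL: "inv E H (fst L) (snd L)" using lv[of k] mk unfolding L_def by simp
  have "card (closed_classes E H (level_cycles E H (fst L, snd L)) (Gstar E H (fst L))) = 1"
    using assms(6) unfolding nu_def level_classes_def L_def by simp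
  then have "\<forall>K\<in>closed_classes E H (level_cycles E H (fst L, snd L)) (Gstar E H (fst L)). \<Union>K = ground H"
    using inv.final[OF iL] by blast
  then show ?thesis unfolding level_classes_def L_def by simp
qed



end
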